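(* Let $\mathcal{U},\mathcal{X},\mathcal{Y},\mathcal{W},\mathcal{V}$ be finite alphabets with $|\mathcal{U}|=\alpha$, $|\mathcal{Y}|=\gamma$. Let $P_{Y|X}$ be a discrete memoryless channel (DMC) from $\mathcal{X}$ to $\mathcal{Y}$ (the main channel) and $P_{W|U}$ a DMC from $\mathcal{U}$ to $\mathcal{W}$ (the side-information channel). Let $\rho:\mathcal{U}\times\mathcal{V}\to[0,\infty)$ be a distortion measure with $\rho_{\max}=\max_{u,v}\rho(u,v)<\infty$, let $\phi:\mathcal{X}\to[0,\infty)$ be a transmission cost function and $\Gamma\ge 0$. Let $\ell,d$ be positive integers and $n$ a positive integer divisible by $\ell$, and let $u^n=(u_1,\dots,u_n)\in\mathcal{U}^n$ be a deterministic source sequence. Consider any periodically time-varying finite-state encoder with state set $\mathcal{Z}^{e}$ of size $s_e$, period $\ell$ and arbitrary initial state $z_1^{e}$, operating as $t=i \bmod \ell$, $x_i=f_t(u_i,z_i^{e})$, $z_{i+1}^{e}=g_t(u_i,z_i^{e})$, $i=1,2,\dots$, where the produced channel input sequence satisfies the cost constraint $\frac{1}{n}\sum_{i=1}^n\phi(x_i)\le\Gamma$. The sequence $x_1,x_2,\dots$ is transmitted over the memoryless channel $P_{Y|X}$, producing $Y_1,Y_2,\dots$, and the side information $W_1,W_2,\dots$ is produced from $u_1,u_2,\dots$ by the memoryless channel $P_{W|U}$, independently of the main channel noise. Consider any periodically time-varying finite-state decoder with state set $\mathcal{Z}^{d}$ of size $s_d$, the same period $\ell$, arbitrary initial state $z_1^{d}$,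 and delay $d$, operating as $t=i\bmod \ell$, $V_{i-d}=f'_t(W_i,Y_i,z_i^{d})$ for $i=d+1,d+2,\dots$, and $z_{i+1}^{d}=g'_t(W_i,Y_i,z_i^{d})$ for $i=1,2,\dots$; the symbols $V_{n-d+1},\dots,V_n$ (not yet produced at time $n$) are arbitrary fixed symbols of $\mathcal{V}$. Then there is a quantity $\epsilon_n$, depending only on $n$, $\ell$, $s_e$, the alphabets and the channel $P_{Y|X}$ (and not on $u^n$ or on the particular encoder and decoder), with $\sqrt{n}\,\epsilon_n\to 0$ as $n\to\infty$, such that $$\frac{1}{n}\sum_{i=1}^n\mathbb{E}\{\rho(u_i,V_i)\}\ \ge\ D^{\mathrm{WZ}}_{\hat U^\ell|W^\ell}\left(C(\Gamma)+\frac{\log s_d}{\ell}+\frac{s_e\alpha^\ell\log\gamma}{\sqrt{n}}+\epsilon_n\right)-\frac{\rho_{\max}\, d}{\ell}.$$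
   Context: Logarithms are base 2. Capacity with cost: $C(\Gamma)=\max_{P_X:\ \mathbb{E}\{\phi(X)\}\le\Gamma} I(X;Y)$, where $I(X;Y)$ is computed under $P_X\times P_{Y|X}$. Empirical $\ell$-th order distribution of $u^n$: writing $u^n=(\mathbf{u}_0,\dots,\mathbf{u}_{n/\ell-1})$ with $\mathbf{u}_i=(u_{i\ell+1},\dots,u_{i\ell+\ell})$, let $P_{\hat U^\ell}(a^\ell)=\frac{\ell}{n}\sum_{i=0}^{n/\ell-1}1\{\mathbf{u}_i=a^\ell\}$ for $a^\ell\in\mathcal{U}^\ell$, and let $\hat U^\ell$ be a random vector with this distribution. Let $W^\ell$ be obtained from $\hat U^\ell$ through the product channel $P_{W^\ell|\hat U^\ell}(w^\ell|u^\ell)=\prod_{j=1}^\ell P_{W|U}(w_j|u_j)$. For $u^\ell,v^\ell$, $\rho(u^\ell,v^\ell)=\sum_{j=1}^\ell\rho(u_j,v_j)$. Wyner–Ziv rate–distortion function of this empirical source with real side-information channel: $R^{\mathrm{WZ}}_{\hat U^\ell|W^\ell}(D)=\min \frac{1}{\ell}I(\hat U^\ell;A|W^\ell)$ $(=\min\frac1\ell[I(\hat U^\ell;A)-I(W^\ell;A)])$, the minimum over all conditional distributions $P_{A|\hat U^\ell}$ of an auxiliary random variable $A$ with alphabet $\mathcal{A}$ of size $\alpha^\ell+1$, such that $A\to\hat U^\ell\to W^\ell$ is a Markov chain and $\min_{G:\mathcal{A}\times\mathcal{W}^\ell\to\mathcal{V}^\ell}\mathbb{E}\{\rho(\hat U^\ell,G(A,W^\ell))\}\le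 \ell D$. The Wyner–Ziv distortion–rate function $D^{\mathrm{WZ}}_{\hat U^\ell|W^\ell}(R)$ is its inverse, i.e., the smallest $D$ with $R^{\mathrm{WZ}}_{\hat U^\ell|W^\ell}(D)\le R$. Expectations in $\mathbb{E}\{\rho(u_i,V_i)\}$ are over the randomness of both channels. *)

theory Defs
  imports "HOL-Probability.Probability"
begin

definition mutual_info :: "('a \<times> 'b) pmf \<Rightarrow> real" where
  "mutual_info J =
     (\<Sum>ab\<in>set_pmf J.
        pmf J ab * log 2 (pmf J ab /
          (pmf (map_pmf fst J) (fst ab) * pmf (map_pmf snd J) (snd ab))))"

definition chan_joint :: "'x pmf \<Rightarrow> ('x \<Rightarrow> 'y pmf) \<Rightarrow> ('x \<times> 'y) pmf" where
  "chan_joint P Ch = bind_pmf P (\<lambda>x. map_pmf (Pair x) (Ch x))"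

definition capacity_cost ::
  "('x::finite \<Rightarrow> 'y pmf) \<Rightarrow> ('x \<Rightarrow> real) \<Rightarrow> real \<Rightarrow> real" where
  "capacity_cost Ch phi Gam =
     Sup {mutual_info (chan_joint P Ch) | P. measure_pmf.expectation P phi \<le> Gam}"

definition block :: "(nat \<Rightarrow> 'u) \<Rightarrow> nat \<Rightarrow> nat \<Rightarrow> 'u list" where
  "block u l i = map (\<lambda>j. u (i * l + j)) [1..<l+1]"

definition empirical_dist :: "(nat \<Rightarrow> 'u) \<Rightarrow> nat \<Rightarrow> nat \<Rightarrow> 'u list pmf" where
  "empirical_dist u n l = map_pmf (block u l) (pmf_of_set {0..<n div l})"

fun prod_chan :: "('u \<Rightarrow> 'w pmf) \<Rightarrow> 'u list \<Rightarrow> 'w list pmf" where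
  "prod_chan Ch [] = return_pmf []"
| "prod_chan Ch (a # as) =
     bind_pmf (Ch a) (\<lambda>w. map_pmf (\<lambda>ws. w # ws) (prod_chan Ch as))"

definition block_dist :: "('u \<Rightarrow> 'v \<Rightarrow> real) \<Rightarrow> 'u list \<Rightarrow> (nat \<Rightarrow> 'v) \<Rightarrow> real" where
  "block_dist rho us vs = (\<Sum>j<length us. rho (us ! j) (vs j))"

text \<open>Joint distribution of (\<open>\<hat>U^l\<close>, A, \<open>W^l\<close>) for a test channel K (A \<rightarrow> U \<rightarrow> W Markov).\<close>
definition wz_joint ::
  "'u list pmf \<Rightarrow> ('u \<Rightarrow> 'w pmf) \<Rightarrow> ('u list \<Rightarrow> nat pmf) \<Rightarrow> ('u list \<times> nat \<times> 'w list) pmf" where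
  "wz_joint Uh Ch K =
     bind_pmf Uh (\<lambda>us. bind_pmf (K us) (\<lambda>a. map_pmf (\<lambda>ws. (us, a, ws)) (prod_chan Ch us)))"

definition wz_rate ::
  "'u list pmf \<Rightarrow> ('u \<Rightarrow> 'w pmf) \<Rightarrow> nat \<Rightarrow> ('u list \<Rightarrow> nat pmf) \<Rightarrow> real" where
  "wz_rate Uh Ch l K =
     (mutual_info (map_pmf (\<lambda>(us, a, ws). (us, a)) (wz_joint Uh Ch K))
      - mutual_info (map_pmf (\<lambda>(us, a, ws). (ws, a)) (wz_joint Uh Ch K))) / real l"

definition wz_distortion ::
  "'u list pmf \<Rightarrow> ('u \<Rightarrow> 'w pmf) \<Rightarrow> ('u \<Rightarrow> 'v \<Rightarrow> real)
     \<Rightarrow> ('u list \<Rightarrow> nat pmf) \<Rightarrow> (nat \<Rightarrow> 'w list \<Rightarrow> nat \<Rightarrow> 'v) \<Rightarrow> real" where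
  "wz_distortion Uh Ch rho K G =
     measure_pmf.expectation (wz_joint Uh Ch K) (\<lambda>(us, a, ws). block_dist rho us (G a ws))"

definition wz_admissible ::
  "'u list pmf \<Rightarrow> ('u::finite \<Rightarrow> 'w pmf) \<Rightarrow> ('u \<Rightarrow> 'v \<Rightarrow> real) \<Rightarrow> nat \<Rightarrow> real
     \<Rightarrow> ('u list \<Rightarrow> nat pmf) \<Rightarrow> bool" where
  "wz_admissible Uh Ch rho l D K \<longleftrightarrow>
     (\<forall>us. set_pmf (K us) \<subseteq> {0..<CARD('u) ^ l + 1}) \<and>
     (\<exists>G. wz_distortion Uh Ch rho K G \<le> real l * D)"

definition wz_rd ::
  "'u list pmf \<Rightarrow> ('u::finite \<Rightarrow> 'w pmf) \<Rightarrow> ('u \<Rightarrow> 'v \<Rightarrow> real) \<Rightarrow> nat \<Rightarrow> real \<Rightarrow> real" where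
  "wz_rd Uh Ch rho l D = Inf {wz_rate Uh Ch l K | K. wz_admissible Uh Ch rho l D K}"

definition wz_dr ::
  "'u list pmf \<Rightarrow> ('u::finite \<Rightarrow> 'w pmf) \<Rightarrow> ('u \<Rightarrow> 'v \<Rightarrow> real) \<Rightarrow> nat \<Rightarrow> real \<Rightarrow> real" where
  "wz_dr Uh Ch rho l R =
     Inf {D. (\<exists>K. wz_admissible Uh Ch rho l D K) \<and> wz_rd Uh Ch rho l D \<le> R}"

text \<open>State sequence: run_fsm step z1 k is the state z_(k+1); step i z is the update at time i.\<close>
fun run_fsm :: "(nat \<Rightarrow> 's \<Rightarrow> 's) \<Rightarrow> 's \<Rightarrow> nat \<Rightarrow> 's" where
  "run_fsm step z1 0 = z1"
| "run_fsm step z1 (Suc k) = step (Suc k) (run_fsm step z1 k)"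

definition enc_out ::
  "nat \<Rightarrow> (nat \<Rightarrow> 'u \<Rightarrow> nat \<Rightarrow> 'x) \<Rightarrow> (nat \<Rightarrow> 'u \<Rightarrow> nat \<Rightarrow> nat) \<Rightarrow> nat
     \<Rightarrow> (nat \<Rightarrow> 'u) \<Rightarrow> nat \<Rightarrow> 'x" where
  "enc_out l f g z1 u i =
     f (i mod l) (u i) (run_fsm (\<lambda>k z. g (k mod l) (u k) z) z1 (i - 1))"

definition dec_state ::
  "nat \<Rightarrow> (nat \<Rightarrow> 'w \<Rightarrow> 'y \<Rightarrow> nat \<Rightarrow> nat) \<Rightarrow> nat \<Rightarrow> (nat \<Rightarrow> 'w) \<Rightarrow> (nat \<Rightarrow> 'y) \<Rightarrow> nat \<Rightarrow> nat" where
  "dec_state l g' z1 w y i = run_fsm (\<lambda>k z. g' (k mod l) (w k) (y k) z) z1 (i - 1)"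

definition dec_out ::
  "nat \<Rightarrow> nat \<Rightarrow> nat \<Rightarrow> (nat \<Rightarrow> 'w \<Rightarrow> 'y \<Rightarrow> nat \<Rightarrow> 'v) \<Rightarrow> (nat \<Rightarrow> 'w \<Rightarrow> 'y \<Rightarrow> nat \<Rightarrow> nat)
     \<Rightarrow> nat \<Rightarrow> (nat \<Rightarrow> 'v) \<Rightarrow> (nat \<Rightarrow> 'w) \<Rightarrow> (nat \<Rightarrow> 'y) \<Rightarrow> nat \<Rightarrow> 'v" where
  "dec_out n l d f' g' z1 vfix w y j =
     (if j + d \<le> n
      then f' ((j + d) mod l) (w (j + d)) (y (j + d)) (dec_state l g' z1 w y (j + d))
      else vfix j)"

definition noise_dist ::
  "nat \<Rightarrow> ('u \<Rightarrow> 'w pmf) \<Rightarrow> ('x \<Rightarrow> 'y pmf) \<Rightarrow> (nat \<Rightarrow> 'u) \<Rightarrow> (nat \<Rightarrow> 'x)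
     \<Rightarrow> ((nat \<Rightarrow> 'w) \<times> (nat \<Rightarrow> 'y)) pmf" where
  "noise_dist n PW PY u x =
     pair_pmf (Pi_pmf {1..n} undefined (\<lambda>i. PW (u i))) (Pi_pmf {1..n} undefined (\<lambda>i. PY (x i)))"

end

theory Submission
  imports Defs
begin

definition ent :: "'a pmf \<Rightarrow> real" where
  "ent p = - (\<Sum>x\<in>set_pmf p. pmf p x * log 2 (pmf p x))"

lemma pmf_map_sum:
  assumes "finite (set_pmf p)"
  shows "pmf (map_pmf g p) y = (\<Sum>x\<in>{x\<in>set_pmf p. g x = y}. pmf p x)"
proof -
  have "pmf (map_pmf g p) y = measure p (g -` {y})" by (rule pmf_map)
  also have "\<dots> = measure p (g -` {y} \<inter> set_pmf p)" by (simp add: measure_Int_set_pmf)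
  also have "\<dots> = (\<Sum>x\<in>g -` {y} \<inter> set_pmf p. pmf p x)"
    by (rule measure_measure_pmf_finite) (use assms in auto)
  also have "g -` {y} \<inter> set_pmf p = {x\<in>set_pmf p. g x = y}" by auto
  finally show ?thesis .
qed

lemma pmf_le_pmf_map:
  assumes "finite (set_pmf p)"
  shows "pmf p x \<le> pmf (map_pmf g p) (g x)"
proof (cases "x \<in> set_pmf p")
  case True
  then show ?thesis unfolding pmf_map_sum[OF assms]
    by (intro member_le_sum) (use assms in auto)
next
  case False
  then show ?thesis by (simp add: set_pmf_eq)
qed

lemma ent_map:
  assumes fin: "finite (set_pmf p)"
  shows "ent (map_pmf g p) = - (\<Sum>x\<in>set_pmf p. pmf p x * log 2 (pmf (map_pmf g p) (g x)))"
proof -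
  have "(\<Sum>x\<in>set_pmf p. pmf p x * log 2 (pmf (map_pmf g p) (g x)))
      = (\<Sum>y\<in>g ` set_pmf p. \<Sum>x\<in>{x\<in>set_pmf p. g x = y}. pmf p x * log 2 (pmf (map_pmf g p) (g x)))"
    by (rule sum.image_gen[OF fin])
  also have "\<dots> = (\<Sum>y\<in>g ` set_pmf p. (\<Sum>x\<in>{x\<in>set_pmf p. g x = y}. pmf p x) * log 2 (pmf (map_pmf g p) y))"
    by (intro sum.cong refl) (auto simp: sum_distrib_right)
  also have "\<dots> = (\<Sum>y\<in>set_pmf (map_pmf g p). pmf (map_pmf g p) y * log 2 (pmf (map_pmf g p) y))"
    by (simp add: pmf_map_sum[OF fin])
  finally show ?thesis unfolding ent_def by simp
qed

lemma ent_nonneg: "finite (set_pmf p) \<Longrightarrow> 0 \<le> ent p"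
  unfolding ent_def
proof -
  assume fin: "finite (set_pmf p)"
  have "(\<Sum>x\<in>set_pmf p. pmf p x * log 2 (pmf p x)) \<le> 0"
  proof (intro sum_nonpos)
    fix x assume "x \<in> set_pmf p"
    then have "0 < pmf p x" "pmf p x \<le> 1" by (auto simp: pmf_positive pmf_le_1)
    then have "log 2 (pmf p x) \<le> 0" by simp
    with \<open>0 < pmf p x\<close> show "pmf p x * log 2 (pmf p x) \<le> 0" by (simp add: mult_nonneg_nonpos)
  qed
  then show "0 \<le> - (\<Sum>x\<in>set_pmf p. pmf p x * log 2 (pmf p x))" by simp
qed

lemma ent_map_le:
  assumes fin: "finite (set_pmf p)"
  shows "ent (map_pmf g p) \<le> ent p"
proof -
  have "(\<Sum>x\<in>set_pmf p. pmf p x * log 2 (pmf p x)) \<le> (\<Sum>x\<in>set_pmf p. pmf p x * log 2 (pmf (map_pmf g p) (g x)))"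
  proof (intro sum_mono)
    fix x assume "x \<in> set_pmf p"
    then have "0 < pmf p x" by (simp add: pmf_positive)
    moreover have "pmf p x \<le> pmf (map_pmf g p) (g x)" by (rule pmf_le_pmf_map[OF fin])
    ultimately show "pmf p x * log 2 (pmf p x) \<le> pmf p x * log 2 (pmf (map_pmf g p) (g x))"
      by (intro mult_left_mono) auto
  qed
  then show ?thesis unfolding ent_map[OF fin] unfolding ent_def by simp
qed

lemma ent_inj:
  assumes fin: "finite (set_pmf p)" and inj: "inj_on g (set_pmf p)"
  shows "ent (map_pmf g p) = ent p"
  unfolding ent_map[OF fin] unfolding ent_def
  by (intro arg_cong[where f=uminus] sum.cong refl) (simp add: pmf_map_inj[OF inj])

lemma gibbs:
  assumes fin: "finite S" and pp: "\<And>x. x\<in>S \<Longrightarrow> p x > 0" and qp: "\<And>x. x\<in>S \<Longrightarrow> q x > 0"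
    and sp: "sum p S = 1" and sq: "sum q S \<le> 1"
  shows "0 \<le> (\<Sum>x\<in>S. p x * log 2 (p x / q x))"
proof -
  have "(\<Sum>x\<in>S. p x * log 2 (q x / p x)) \<le> (\<Sum>x\<in>S. (q x - p x) / ln 2)"
  proof (intro sum_mono)
    fix x assume x: "x \<in> S"
    have pos: "0 < q x / p x" using pp[OF x] qp[OF x] by simp
    have "ln (q x / p x) \<le> q x / p x - 1" using pos by (intro ln_le_minus_one)
    then have "log 2 (q x / p x) \<le> (q x / p x - 1) / ln 2"
      by (simp add: log_def divide_right_mono)
    then have "p x * log 2 (q x / p x) \<le> p x * ((q x / p x - 1) / ln 2)"
      using pp[OF x] by (intro mult_left_mono) auto
    also have "\<dots> = (q x - p x) / ln 2" using pp[OF x] by (simp add: field_simps)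
    finally show "p x * log 2 (q x / p x) \<le> (q x - p x) / ln 2" .
  qed
  also have "\<dots> = (sum q S - sum p S) / ln 2" by (simp add: sum_divide_distrib[symmetric] sum_subtractf)
  also have "\<dots> \<le> 0" using sp sq by (simp add: divide_nonpos_pos)
  finally have "(\<Sum>x\<in>S. p x * log 2 (q x / p x)) \<le> 0" .
  moreover have "(\<Sum>x\<in>S. p x * log 2 (q x / p x)) = - (\<Sum>x\<in>S. p x * log 2 (p x / q x))"
    unfolding sum_negf[symmetric]
    by (intro sum.cong refl) (use pp qp in \<open>simp add: log_divide algebra_simps\<close>)
  ultimately show ?thesis by simp
qed

lemma ent_le_card:
  assumes fin: "finite A" and sub: "set_pmf p \<subseteq> A"
  shows "ent p \<le> log 2 (card A)"
proof -
  have finp: "finite (set_pmf p)" using fin sub finite_subset by blast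
  have ne: "set_pmf p \<noteq> {}" by (rule set_pmf_not_empty)
  then have cpos: "card A > 0" using fin sub by (metis card_gt_0_iff empty_iff finite_subset subset_empty)
  have s1: "sum (pmf p) (set_pmf p) = 1" by (rule sum_pmf_eq_1[OF finp]) simp
  have "sum (\<lambda>x. 1 / real (card A)) (set_pmf p) = card (set_pmf p) / card A" by simp
  also have "\<dots> \<le> 1" using card_mono[OF fin sub] cpos by simp
  finally have s2: "sum (\<lambda>x. 1 / real (card A)) (set_pmf p) \<le> 1" .
  have "0 \<le> (\<Sum>x\<in>set_pmf p. pmf p x * log 2 (pmf p x / (1 / real (card A))))"
    by (rule gibbs[OF finp _ _ s1 s2]) (use cpos in \<open>auto simp: pmf_positive\<close>)
  also have "\<dots> = (\<Sum>x\<in>set_pmf p. pmf p x * log 2 (pmf p x)) + (\<Sum>x\<in>set_pmf p. pmf p x) * log 2 (card A)"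
    unfolding sum_distrib_right sum.distrib[symmetric]
    by (intro sum.cong refl) (use cpos in \<open>auto simp: pmf_positive log_mult distrib_left\<close>)
  also have "\<dots> = log 2 (card A) - ent p" using s1 unfolding ent_def by simp
  finally show ?thesis by simp
qed

lemma pmf_tag:
  "pmf (bind_pmf M (\<lambda>z. map_pmf (Pair z) (L z))) (z, w) = pmf M z * pmf (L z) w"
proof -
  have eq: "pmf (map_pmf (Pair z') (L z')) (z, w) = indicator {z} z' * pmf (L z) w" for z'
  proof (cases "z' = z")
    case True
    have "inj (Pair z)" by (auto simp: inj_def)
    from pmf_map_inj'[OF this, of "L z" w] True show ?thesis by simp
  next
    case False
    then have "(z, w) \<notin> set_pmf (map_pmf (Pair z') (L z'))" by auto
    then show ?thesis using False by (simp add: set_pmf_eq)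
  qed
  have "pmf (bind_pmf M (\<lambda>z. map_pmf (Pair z) (L z))) (z, w) = (\<integral>z'. indicator {z} z' * pmf (L z) w \<partial>M)"
    unfolding pmf_bind eq ..
  also have "\<dots> = measure M {z} * pmf (L z) w" by simp
  finally show ?thesis by (simp add: measure_pmf_single)
qed

lemma set_pmf_tag:
  "set_pmf (bind_pmf M (\<lambda>z. map_pmf (Pair z) (L z))) = Sigma (set_pmf M) (\<lambda>z. set_pmf (L z))"
  by auto

lemma finite_set_pmf_tag:
  assumes "finite (set_pmf M)" "\<And>z. z \<in> set_pmf M \<Longrightarrow> finite (set_pmf (L z))"
  shows "finite (set_pmf (bind_pmf M (\<lambda>z. map_pmf (Pair z) (L z))))"
  unfolding set_pmf_tag using assms by auto

lemma map_fst_tag: "map_pmf fst (bind_pmf M (\<lambda>z. map_pmf (Pair z) (L z))) = M"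
  by (simp add: map_bind_pmf pmf.map_comp o_def bind_return_pmf' map_pmf_def[symmetric]
      flip: map_pmf_def)

lemma ent_tag:
  assumes fM: "finite (set_pmf M)" and fL: "\<And>z. z \<in> set_pmf M \<Longrightarrow> finite (set_pmf (L z))"
  shows "ent (bind_pmf M (\<lambda>z. map_pmf (Pair z) (L z))) = ent M + (\<Sum>z\<in>set_pmf M. pmf M z * ent (L z))"
proof -
  let ?T = "bind_pmf M (\<lambda>z. map_pmf (Pair z) (L z))"
  have "(\<Sum>t\<in>set_pmf ?T. pmf ?T t * log 2 (pmf ?T t))
      = (\<Sum>(z,w)\<in>Sigma (set_pmf M) (\<lambda>z. set_pmf (L z)). pmf M z * pmf (L z) w * log 2 (pmf M z * pmf (L z) w))"
    unfolding set_pmf_tag by (intro sum.cong refl) (auto simp: pmf_tag)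
  also have "\<dots> = (\<Sum>z\<in>set_pmf M. \<Sum>w\<in>set_pmf (L z). pmf M z * pmf (L z) w * log 2 (pmf M z * pmf (L z) w))"
    by (subst sum.Sigma) (use fM fL in auto)
  also have "\<dots> = (\<Sum>z\<in>set_pmf M. pmf M z * log 2 (pmf M z) * (\<Sum>w\<in>set_pmf (L z). pmf (L z) w)
         + pmf M z * (\<Sum>w\<in>set_pmf (L z). pmf (L z) w * log 2 (pmf (L z) w)))"
    by (intro sum.cong refl)
       (auto simp: sum_distrib_left sum_distrib_right sum.distrib[symmetric] log_mult pmf_positive
                   algebra_simps intro!: sum.cong)
  also have "\<dots> = (\<Sum>z\<in>set_pmf M. pmf M z * log 2 (pmf M z) - pmf M z * ent (L z))"
    by (intro sum.cong refl) (use fL in \<open>auto simp: ent_def sum_pmf_eq_1\<close>)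
  finally show ?thesis unfolding ent_def[of ?T] ent_def[of M] sum_subtractf
    by (simp add: ent_def)
qed

text \<open>Triples with conditioning variable first.\<close>

definition mZX :: "'c \<times> 'a \<times> 'b \<Rightarrow> 'c \<times> 'a" where "mZX t = (fst t, fst (snd t))"
definition mZY :: "'c \<times> 'a \<times> 'b \<Rightarrow> 'c \<times> 'b" where "mZY t = (fst t, snd (snd t))"

lemma pmf_map_pos:
  assumes "finite (set_pmf p)" "t \<in> set_pmf p"
  shows "0 < pmf (map_pmf g p) (g t)"
  using assms by (simp add: pmf_positive)

lemma ent_diff:
  fixes T :: "('c \<times> 'a \<times> 'b) pmf"
  assumes fin: "finite (set_pmf T)"
  shows "ent (map_pmf mZX T) + ent (map_pmf mZY T) - ent T - ent (map_pmf fst T)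
    = (\<Sum>t\<in>set_pmf T. pmf T t * log 2 (pmf T t * pmf (map_pmf fst T) (fst t)
          / (pmf (map_pmf mZX T) (mZX t) * pmf (map_pmf mZY T) (mZY t))))"
proof -
  have "ent (map_pmf mZX T) + ent (map_pmf mZY T) - ent T - ent (map_pmf fst T)
     = (\<Sum>t\<in>set_pmf T. pmf T t * log 2 (pmf T t) + pmf T t * log 2 (pmf (map_pmf fst T) (fst t))
          - pmf T t * log 2 (pmf (map_pmf mZX T) (mZX t)) - pmf T t * log 2 (pmf (map_pmf mZY T) (mZY t)))"
    unfolding ent_map[OF fin] ent_def[of T] by (simp add: sum.distrib sum_subtractf)
  also have "\<dots> = (\<Sum>t\<in>set_pmf T. pmf T t * log 2 (pmf T t * pmf (map_pmf fst T) (fst t)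
          / (pmf (map_pmf mZX T) (mZX t) * pmf (map_pmf mZY T) (mZY t))))"
  proof (intro sum.cong refl)
    fix t assume t: "t \<in> set_pmf T"
    have p1: "0 < pmf T t" using t by (simp add: pmf_positive)
    have p2: "0 < pmf (map_pmf fst T) (fst t)" by (rule pmf_map_pos[OF fin t, of fst])
    have p3: "0 < pmf (map_pmf mZX T) (mZX t)" by (rule pmf_map_pos[OF fin t, of mZX])
    have p4: "0 < pmf (map_pmf mZY T) (mZY t)" by (rule pmf_map_pos[OF fin t, of mZY])
    show "pmf T t * log 2 (pmf T t) + pmf T t * log 2 (pmf (map_pmf fst T) (fst t))
          - pmf T t * log 2 (pmf (map_pmf mZX T) (mZX t)) - pmf T t * log 2 (pmf (map_pmf mZY T) (mZY t))
        = pmf T t * log 2 (pmf T t * pmf (map_pmf fst T) (fst t)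
          / (pmf (map_pmf mZX T) (mZX t) * pmf (map_pmf mZY T) (mZY t)))"
      using p1 p2 p3 p4 by (simp add: log_mult log_divide algebra_simps)
  qed
  finally show ?thesis .
qed

lemma submod_triple:
  fixes T :: "('c \<times> 'a \<times> 'b) pmf"
  assumes fin: "finite (set_pmf T)"
  shows "ent T + ent (map_pmf fst T) \<le> ent (map_pmf mZX T) + ent (map_pmf mZY T)"
proof -
  let ?pZ = "pmf (map_pmf fst T)" and ?pX = "pmf (map_pmf mZX T)" and ?pY = "pmf (map_pmf mZY T)"
  define q where "q t = ?pX (mZX t) * ?pY (mZY t) / ?pZ (fst t)" for t
  let ?SX = "set_pmf (map_pmf mZX T)" and ?SY = "set_pmf (map_pmf mZY T)"
  define F where "F = Sigma ?SX (\<lambda>a. {c\<in>?SY. fst c = fst a})"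
  define h where "h t = (mZX t, mZY t)" for t :: "'c \<times> 'a \<times> 'b"
  define q' where "q' ac = ?pX (fst ac) * ?pY (snd ac) / ?pZ (fst (fst ac))" for ac :: "('c \<times> 'a) \<times> ('c \<times> 'b)"
  have finX: "finite ?SX" and finY: "finite ?SY" using fin by auto
  have injh: "inj_on h (set_pmf T)" by (auto simp: inj_on_def h_def mZX_def mZY_def prod_eq_iff)
  have hF: "h ` set_pmf T \<subseteq> F" by (auto simp: h_def F_def mZX_def mZY_def)
  have finF: "finite F" unfolding F_def using finX finY by auto
  have "sum q (set_pmf T) = sum q' (h ` set_pmf T)"
    by (subst sum.reindex[OF injh]) (simp add: q_def q'_def h_def mZX_def mZY_def)
  also have "\<dots> \<le> sum q' F"
    by (intro sum_mono2[OF finF hF]) (auto simp: q'_def)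
  also have "\<dots> = (\<Sum>a\<in>?SX. \<Sum>c\<in>{c\<in>?SY. fst c = fst a}. q' (a, c))"
    unfolding F_def by (subst sum.Sigma) (use finX finY in auto)
  also have "\<dots> = (\<Sum>a\<in>?SX. ?pX a / ?pZ (fst a) * (\<Sum>c\<in>{c\<in>?SY. fst c = fst a}. ?pY c))"
    by (intro sum.cong refl) (auto simp: q'_def sum_distrib_left)
  also have "\<dots> = (\<Sum>a\<in>?SX. ?pX a)"
  proof (intro sum.cong refl)
    fix a assume a: "a \<in> ?SX"
    have "(\<Sum>c\<in>{c\<in>?SY. fst c = fst a}. ?pY c) = pmf (map_pmf fst (map_pmf mZY T)) (fst a)"
      by (rule pmf_map_sum[symmetric]) (use finY in auto)
    also have "map_pmf fst (map_pmf mZY T) = map_pmf fst T"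
      by (simp add: pmf.map_comp o_def mZY_def)
    finally have e: "(\<Sum>c\<in>{c\<in>?SY. fst c = fst a}. ?pY c) = ?pZ (fst a)" .
    have "map_pmf fst (map_pmf mZX T) = map_pmf fst T"
      by (simp add: pmf.map_comp o_def mZX_def)
    then have "0 < ?pZ (fst a)" using a
      by (metis finX pmf_map_pos)
    then show "?pX a / ?pZ (fst a) * (\<Sum>c\<in>{c\<in>?SY. fst c = fst a}. ?pY c) = ?pX a"
      unfolding e by simp
  qed
  also have "\<dots> = 1" by (rule sum_pmf_eq_1[OF finX]) simp
  finally have sq: "sum q (set_pmf T) \<le> 1" .
  have "0 \<le> (\<Sum>t\<in>set_pmf T. pmf T t * log 2 (pmf T t / q t))"
  proof (rule gibbs[OF fin _ _ _ sq])
    show "\<And>x. x \<in> set_pmf T \<Longrightarrow> 0 < pmf T x" by (simp add: pmf_positive)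
    show "0 < q x" if x: "x \<in> set_pmf T" for x unfolding q_def
      using pmf_map_pos[OF fin x, of fst] pmf_map_pos[OF fin x, of mZX] pmf_map_pos[OF fin x, of mZY]
      by (intro divide_pos_pos mult_pos_pos) auto
    show "sum (pmf T) (set_pmf T) = 1" by (rule sum_pmf_eq_1[OF fin]) simp
  qed
  also have "\<dots> = ent (map_pmf mZX T) + ent (map_pmf mZY T) - ent T - ent (map_pmf fst T)"
    unfolding ent_diff[OF fin] by (intro sum.cong refl) (simp add: q_def field_simps)
  finally show ?thesis by simp
qed

lemma ci_triple:
  fixes T :: "('c \<times> 'a \<times> 'b) pmf"
  assumes fin: "finite (set_pmf T)"
    and fac: "\<And>t. t \<in> set_pmf T \<Longrightarrow> pmf T t * pmf (map_pmf fst T) (fst t)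
          = pmf (map_pmf mZX T) (mZX t) * pmf (map_pmf mZY T) (mZY t)"
  shows "ent T + ent (map_pmf fst T) = ent (map_pmf mZX T) + ent (map_pmf mZY T)"
proof -
  have "ent (map_pmf mZX T) + ent (map_pmf mZY T) - ent T - ent (map_pmf fst T) = 0"
    unfolding ent_diff[OF fin]
  proof (intro sum.neutral ballI)
    fix t assume t: "t \<in> set_pmf T"
    have "0 < pmf (map_pmf mZX T) (mZX t) * pmf (map_pmf mZY T) (mZY t)"
      using pmf_map_pos[OF fin t, of mZX] pmf_map_pos[OF fin t, of mZY] by (intro mult_pos_pos) auto
    then have ne: "pmf (map_pmf mZX T) (mZX t) * pmf (map_pmf mZY T) (mZY t) \<noteq> 0" by (metis order_less_irrefl)
    show "pmf T t * log 2 (pmf T t * pmf (map_pmf fst T) (fst t)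
          / (pmf (map_pmf mZX T) (mZX t) * pmf (map_pmf mZY T) (mZY t))) = 0"
      unfolding fac[OF t] by (simp only: divide_self[OF ne] log_one mult_zero_right)
  qed
  then show ?thesis by simp
qed

lemma ci_bind:
  assumes fM: "finite (set_pmf M)" and f1: "\<And>z. finite (set_pmf (K1 z))" and f2: "\<And>z. finite (set_pmf (K2 z))"
  defines "T \<equiv> bind_pmf M (\<lambda>z. map_pmf (Pair z) (pair_pmf (K1 z) (K2 z)))"
  shows "ent T + ent (map_pmf fst T) = ent (map_pmf mZX T) + ent (map_pmf mZY T)"
proof (rule ci_triple)
  show fin: "finite (set_pmf T)" unfolding T_def
    by (rule finite_set_pmf_tag) (use fM f1 f2 in auto)
  have e1: "map_pmf (\<lambda>xa. (z, fst xa)) (pair_pmf (K1 z) (K2 z)) = map_pmf (Pair z) (K1 z)" for z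
  proof -
    have "map_pmf (\<lambda>xa. (z, fst xa)) (pair_pmf (K1 z) (K2 z)) = map_pmf (Pair z) (map_pmf fst (pair_pmf (K1 z) (K2 z)))"
      by (simp add: pmf.map_comp o_def)
    then show ?thesis by (simp add: map_fst_pair_pmf)
  qed
  have e2: "map_pmf (\<lambda>xa. (z, snd xa)) (pair_pmf (K1 z) (K2 z)) = map_pmf (Pair z) (K2 z)" for z
  proof -
    have "map_pmf (\<lambda>xa. (z, snd xa)) (pair_pmf (K1 z) (K2 z)) = map_pmf (Pair z) (map_pmf snd (pair_pmf (K1 z) (K2 z)))"
      by (simp add: pmf.map_comp o_def)
    then show ?thesis by (simp add: map_snd_pair_pmf)
  qed
  have m1: "map_pmf mZX T = bind_pmf M (\<lambda>z. map_pmf (Pair z) (K1 z))"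
    unfolding T_def by (simp add: map_bind_pmf pmf.map_comp o_def mZX_def e1)
  have m2: "map_pmf mZY T = bind_pmf M (\<lambda>z. map_pmf (Pair z) (K2 z))"
    unfolding T_def by (simp add: map_bind_pmf pmf.map_comp o_def mZY_def e2)
  have m0: "map_pmf fst T = M" unfolding T_def by (rule map_fst_tag)
  fix t assume "t \<in> set_pmf T"
  obtain z x y where t: "t = (z, x, y)" by (cases t) auto
  show "pmf T t * pmf (map_pmf fst T) (fst t)
          = pmf (map_pmf mZX T) (mZX t) * pmf (map_pmf mZY T) (mZY t)"
    unfolding m0 m1 m2 unfolding T_def t by (simp add: pmf_tag pmf_pair mZX_def mZY_def)
qed

definition H :: "'o pmf \<Rightarrow> ('o \<Rightarrow> 'a) \<Rightarrow> real" where
  "H P X = ent (map_pmf X P)"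

lemma fin_map: "finite (set_pmf P) \<Longrightarrow> finite (set_pmf (map_pmf X P))" by simp

lemma H_nonneg: "finite (set_pmf P) \<Longrightarrow> 0 \<le> H P X"
  unfolding H_def by (rule ent_nonneg) simp

lemma H_cong: "(\<And>\<omega>. \<omega> \<in> set_pmf P \<Longrightarrow> X \<omega> = Y \<omega>) \<Longrightarrow> H P X = H P Y"
  unfolding H_def by (metis map_pmf_cong)

lemma H_fun_le:
  assumes "finite (set_pmf P)"
  shows "H P (\<lambda>\<omega>. f (X \<omega>)) \<le> H P X"
proof -
  have "map_pmf (\<lambda>\<omega>. f (X \<omega>)) P = map_pmf f (map_pmf X P)" by (simp add: pmf.map_comp o_def)
  then show ?thesis unfolding H_def using ent_map_le[of "map_pmf X P" f] assms by simp
qed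

lemma H_det_le:
  assumes "finite (set_pmf P)" "\<And>\<omega>. \<omega> \<in> set_pmf P \<Longrightarrow> Y \<omega> = f (X \<omega>)"
  shows "H P Y \<le> H P X"
proof -
  have "H P Y = H P (\<lambda>\<omega>. f (X \<omega>))" by (rule H_cong) (use assms in auto)
  then show ?thesis using H_fun_le[OF assms(1)] by simp
qed

lemma H_equiv:
  assumes "finite (set_pmf P)" "\<And>\<omega>. \<omega> \<in> set_pmf P \<Longrightarrow> Y \<omega> = f (X \<omega>)"
    "\<And>\<omega>. \<omega> \<in> set_pmf P \<Longrightarrow> X \<omega> = g (Y \<omega>)"
  shows "H P Y = H P X"
proof -
  have "H P Y \<le> H P X" by (rule H_det_le[of P Y f X]) (use assms in auto)
  moreover have "H P X \<le> H P Y" by (rule H_det_le[of P X g Y]) (use assms in auto)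
  ultimately show ?thesis by simp
qed

lemma H_pair_ge1: "finite (set_pmf P) \<Longrightarrow> H P X \<le> H P (\<lambda>\<omega>. (X \<omega>, Y \<omega>))"
  by (rule H_det_le[where f=fst]) auto

lemma H_pair_ge2: "finite (set_pmf P) \<Longrightarrow> H P Y \<le> H P (\<lambda>\<omega>. (X \<omega>, Y \<omega>))"
  by (rule H_det_le[where f=snd]) auto

lemma H_submod:
  assumes fin: "finite (set_pmf P)"
  shows "H P (\<lambda>\<omega>. (Z \<omega>, X \<omega>, Y \<omega>)) + H P Z \<le> H P (\<lambda>\<omega>. (Z \<omega>, X \<omega>)) + H P (\<lambda>\<omega>. (Z \<omega>, Y \<omega>))"
proof -
  let ?T = "map_pmf (\<lambda>\<omega>. (Z \<omega>, X \<omega>, Y \<omega>)) P"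
  have "ent ?T + ent (map_pmf fst ?T) \<le> ent (map_pmf mZX ?T) + ent (map_pmf mZY ?T)"
    by (rule submod_triple) (use fin in simp)
  then show ?thesis unfolding H_def by (simp add: pmf.map_comp o_def mZX_def mZY_def)
qed

lemma H_const: "finite (set_pmf P) \<Longrightarrow> H P (\<lambda>\<omega>. c) = 0"
  unfolding H_def by (simp add: ent_def)

lemma H_subadd:
  assumes fin: "finite (set_pmf P)"
  shows "H P (\<lambda>\<omega>. (X \<omega>, Y \<omega>)) \<le> H P X + H P Y"
proof -
  have "H P (\<lambda>\<omega>. ((), X \<omega>, Y \<omega>)) + H P (\<lambda>\<omega>. ()) \<le> H P (\<lambda>\<omega>. ((), X \<omega>)) + H P (\<lambda>\<omega>. ((), Y \<omega>))"
    by (rule H_submod[OF fin])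
  moreover have "H P (\<lambda>\<omega>. ((), X \<omega>, Y \<omega>)) = H P (\<lambda>\<omega>. (X \<omega>, Y \<omega>))"
    by (rule H_equiv[OF fin, where f="\<lambda>t. ((), t)" and g=snd]) auto
  moreover have "H P (\<lambda>\<omega>. ((), X \<omega>)) = H P X"
    by (rule H_equiv[OF fin, where f="\<lambda>t. ((), t)" and g=snd]) auto
  moreover have "H P (\<lambda>\<omega>. ((), Y \<omega>)) = H P Y"
    by (rule H_equiv[OF fin, where f="\<lambda>t. ((), t)" and g=snd]) auto
  ultimately show ?thesis using H_const[OF fin, of "()"] by linarith
qed

lemma H_le_card:
  assumes fin: "finite (set_pmf P)" and A: "finite A" and XA: "\<And>\<omega>. \<omega> \<in> set_pmf P \<Longrightarrow> X \<omega> \<in> A"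
  shows "H P X \<le> log 2 (card A)"
  unfolding H_def by (rule ent_le_card[OF A]) (use XA in auto)

lemma H_ci:
  assumes fin: "finite (set_pmf P)"
    and eq: "map_pmf (\<lambda>\<omega>. (Z \<omega>, X \<omega>, Y \<omega>)) P = bind_pmf M (\<lambda>z. map_pmf (Pair z) (pair_pmf (K1 z) (K2 z)))"
    and fM: "finite (set_pmf M)" and f1: "\<And>z. finite (set_pmf (K1 z))" and f2: "\<And>z. finite (set_pmf (K2 z))"
  shows "H P (\<lambda>\<omega>. (Z \<omega>, X \<omega>, Y \<omega>)) + H P Z = H P (\<lambda>\<omega>. (Z \<omega>, X \<omega>)) + H P (\<lambda>\<omega>. (Z \<omega>, Y \<omega>))"
proof -
  let ?T = "map_pmf (\<lambda>\<omega>. (Z \<omega>, X \<omega>, Y \<omega>)) P"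
  have "ent ?T + ent (map_pmf fst ?T) = ent (map_pmf mZX ?T) + ent (map_pmf mZY ?T)"
    unfolding eq by (rule ci_bind[OF fM f1 f2])
  then show ?thesis unfolding H_def by (simp add: pmf.map_comp o_def mZX_def mZY_def)
qed

lemma mi_ent:
  assumes fin: "finite (set_pmf J)"
  shows "mutual_info J = ent (map_pmf fst J) + ent (map_pmf snd J) - ent J"
proof -
  have "mutual_info J = (\<Sum>ab\<in>set_pmf J. pmf J ab * log 2 (pmf J ab)
      - pmf J ab * log 2 (pmf (map_pmf fst J) (fst ab)) - pmf J ab * log 2 (pmf (map_pmf snd J) (snd ab)))"
    unfolding mutual_info_def
  proof (intro sum.cong refl)
    fix ab assume ab: "ab \<in> set_pmf J"
    have p1: "0 < pmf J ab" using ab by (simp add: pmf_positive)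
    have p2: "0 < pmf (map_pmf fst J) (fst ab)" by (rule pmf_map_pos[OF fin ab, of fst])
    have p3: "0 < pmf (map_pmf snd J) (snd ab)" by (rule pmf_map_pos[OF fin ab, of snd])
    show "pmf J ab * log 2 (pmf J ab / (pmf (map_pmf fst J) (fst ab) * pmf (map_pmf snd J) (snd ab)))
      = pmf J ab * log 2 (pmf J ab)
      - pmf J ab * log 2 (pmf (map_pmf fst J) (fst ab)) - pmf J ab * log 2 (pmf (map_pmf snd J) (snd ab))"
      using p1 p2 p3 by (simp add: log_mult log_divide algebra_simps)
  qed
  then show ?thesis unfolding ent_map[OF fin] ent_def[of J] by (simp add: sum_subtractf)
qed

lemma mi_H:
  assumes fin: "finite (set_pmf P)"
  shows "mutual_info (map_pmf (\<lambda>\<omega>. (X \<omega>, Y \<omega>)) P) = H P X + H P Y - H P (\<lambda>\<omega>. (X \<omega>, Y \<omega>))"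
  unfolding H_def by (subst mi_ent) (use fin in \<open>simp_all add: pmf.map_comp o_def\<close>)

lemma H_tag:
  assumes fin: "finite (set_pmf P)"
    and eq: "map_pmf (\<lambda>\<omega>. (X \<omega>, Y \<omega>)) P = bind_pmf M (\<lambda>x. map_pmf (Pair x) (L x))"
    and fM: "finite (set_pmf M)" and fL: "\<And>x. finite (set_pmf (L x))"
  shows "H P (\<lambda>\<omega>. (X \<omega>, Y \<omega>)) = H P X + (\<Sum>x\<in>set_pmf M. pmf M x * ent (L x))"
    and "H P X = ent M"
proof -
  have "map_pmf X P = map_pmf fst (map_pmf (\<lambda>\<omega>. (X \<omega>, Y \<omega>)) P)" by (simp add: pmf.map_comp o_def)
  then show hx: "H P X = ent M" unfolding H_def eq map_fst_tag by simp
  show "H P (\<lambda>\<omega>. (X \<omega>, Y \<omega>)) = H P X + (\<Sum>x\<in>set_pmf M. pmf M x * ent (L x))"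
    unfolding hx unfolding H_def eq by (rule ent_tag[OF fM fL])
qed

lemma exp_sum_super:
  assumes "finite A" "set_pmf p \<subseteq> A"
  shows "measure_pmf.expectation p f = (\<Sum>x\<in>A. pmf p x * f x)"
  by (subst integral_measure_pmf_real[OF assms(1)]) (use assms(2) in \<open>auto simp: mult.commute\<close>)

lemma exp_sum:
  assumes "finite (set_pmf p)"
  shows "measure_pmf.expectation p f = (\<Sum>x\<in>set_pmf p. pmf p x * f x)"
  by (rule exp_sum_super[OF assms]) simp

lemma pmf_bind_sum_super:
  assumes "finite A" "set_pmf M \<subseteq> A"
  shows "pmf (bind_pmf M F) y = (\<Sum>x\<in>A. pmf M x * pmf (F x) y)"
  unfolding pmf_bind by (rule exp_sum_super[OF assms])

lemma exp_bind:
  assumes fM: "finite (set_pmf M)" and fF: "\<And>x. x \<in> set_pmf M \<Longrightarrow> finite (set_pmf (F x))"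
  shows "measure_pmf.expectation (bind_pmf M F) f
      = (\<Sum>x\<in>set_pmf M. pmf M x * measure_pmf.expectation (F x) f)"
proof -
  let ?S = "set_pmf (bind_pmf M F)"
  have fS: "finite ?S" using fM fF by auto
  have "measure_pmf.expectation (bind_pmf M F) f = (\<Sum>y\<in>?S. pmf (bind_pmf M F) y * f y)"
    by (rule exp_sum[OF fS])
  also have "\<dots> = (\<Sum>y\<in>?S. \<Sum>x\<in>set_pmf M. pmf M x * pmf (F x) y * f y)"
    by (intro sum.cong refl) (simp add: pmf_bind_sum_super[OF fM] sum_distrib_right)
  also have "\<dots> = (\<Sum>x\<in>set_pmf M. pmf M x * (\<Sum>y\<in>?S. pmf (F x) y * f y))"
    by (subst sum.swap) (simp add: sum_distrib_left mult.assoc)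
  also have "\<dots> = (\<Sum>x\<in>set_pmf M. pmf M x * measure_pmf.expectation (F x) f)"
  proof (intro sum.cong refl)
    fix x assume x: "x \<in> set_pmf M"
    have "set_pmf (F x) \<subseteq> ?S" using x by auto
    then show "pmf M x * (\<Sum>y\<in>?S. pmf (F x) y * f y) = pmf M x * measure_pmf.expectation (F x) f"
      by (subst exp_sum_super[OF fS]) auto
  qed
  finally show ?thesis .
qed

lemma lin_dep:
  fixes c :: "'e \<Rightarrow> 'a \<Rightarrow> real"
  assumes "finite E" "finite V" "card E < card V"
  shows "\<exists>\<mu>. (\<exists>a\<in>V. \<mu> a \<noteq> 0) \<and> (\<forall>a. a \<notin> V \<longrightarrow> \<mu> a = 0) \<and> (\<forall>e\<in>E. (\<Sum>a\<in>V. c e a * \<mu> a) = 0)"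
  using assms
proof (induction E arbitrary: V c rule: finite_induct)
  case empty
  then obtain a where a: "a \<in> V" by fastforce
  show ?case by (rule exI[of _ "\<lambda>b. if b = a then 1 else 0"]) (use a in auto)
next
  case (insert e E)
  show ?case
  proof (cases "\<forall>a\<in>V. c e a = 0")
    case True
    have "card E < card V" using insert by simp
    from insert.IH[OF insert.prems(1) this, of c] obtain \<mu> where
      \<mu>: "(\<exists>a\<in>V. \<mu> a \<noteq> 0)" "(\<forall>a. a \<notin> V \<longrightarrow> \<mu> a = 0)" "(\<forall>e\<in>E. (\<Sum>a\<in>V. c e a * \<mu> a) = 0)" by blast
    show ?thesis by (rule exI[of _ \<mu>]) (use \<mu> True in auto)
  next
    case False
    then obtain a0 where a0: "a0 \<in> V" "c e a0 \<noteq> 0" by blast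
    define V' where "V' = V - {a0}"
    define c' where "c' e' a = c e' a - c e' a0 * c e a / c e a0" for e' a
    have fV': "finite V'" using insert by (simp add: V'_def)
    have "card V' = card V - 1" using a0 insert by (simp add: V'_def)
    then have cV': "card E < card V'" using insert by simp
    from insert.IH[OF fV' cV', of c'] obtain \<mu>' where
      \<mu>': "(\<exists>a\<in>V'. \<mu>' a \<noteq> 0)" "(\<forall>a. a \<notin> V' \<longrightarrow> \<mu>' a = 0)" "(\<forall>e\<in>E. (\<Sum>a\<in>V'. c' e a * \<mu>' a) = 0)" by blast
    define \<mu> where "\<mu> a = (if a = a0 then - (\<Sum>b\<in>V'. c e b * \<mu>' b) / c e a0 else \<mu>' a)" for a
    have sumV: "(\<Sum>a\<in>V. g a) = g a0 + (\<Sum>a\<in>V'. g a)" for g :: "'a \<Rightarrow> real"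
      unfolding V'_def using a0 insert by (simp add: sum.remove)
    have mV': "\<And>a. a \<in> V' \<Longrightarrow> \<mu> a = \<mu>' a" by (auto simp: \<mu>_def V'_def)
    have s1: "(\<Sum>a\<in>V'. g a * \<mu> a) = (\<Sum>a\<in>V'. g a * \<mu>' a)" for g :: "'a \<Rightarrow> real"
      by (intro sum.cong refl) (simp add: mV')
    show ?thesis
    proof (intro exI[of _ \<mu>] conjI ballI allI impI)
      from \<mu>'(1) obtain a where a: "a \<in> V'" "\<mu>' a \<noteq> 0" by blast
      then show "\<exists>a\<in>V. \<mu> a \<noteq> 0" using mV'[OF a(1)] by (intro bexI[of _ a]) (auto simp: V'_def)
      show "\<mu> a = 0" if "a \<notin> V" for a using that \<mu>'(2) a0 by (auto simp: \<mu>_def V'_def)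
      fix e' assume e': "e' \<in> insert e E"
      show "(\<Sum>a\<in>V. c e' a * \<mu> a) = 0"
      proof (cases "e' = e")
        case True
        show ?thesis unfolding True sumV s1 using a0 by (simp add: \<mu>_def)
      next
        case False
        then have e'E: "e' \<in> E" using e' by simp
        have "(\<Sum>a\<in>V. c e' a * \<mu> a) = c e' a0 * \<mu> a0 + (\<Sum>a\<in>V'. c e' a * \<mu>' a)"
          unfolding sumV s1 ..
        also have "\<dots> = (\<Sum>a\<in>V'. c' e' a * \<mu>' a)"
          using a0 by (simp add: \<mu>_def c'_def sum_distrib_left sum_subtractf algebra_simps
              sum_divide_distrib[symmetric])
        also have "\<dots> = 0" using \<mu>'(3) e'E by simp
        finally show ?thesis .
      qed
    qed
  qed
qed

lemma pmf_of_weights: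
  assumes "finite S" "\<And>a. 0 \<le> w a" "\<And>a. a \<notin> S \<Longrightarrow> w a = 0" "sum w S = 1"
  shows "\<exists>p. \<forall>a. pmf p a = w a"
proof -
  have "(\<integral>\<^sup>+x. ennreal (w x) \<partial>count_space UNIV) = (\<Sum>x\<in>S. ennreal (w x))"
    by (rule nn_integral_count_space') (use assms in auto)
  also have "\<dots> = ennreal (sum w S)" using assms by (simp add: sum_ennreal)
  finally have "(\<integral>\<^sup>+x. ennreal (w x) \<partial>count_space UNIV) = 1" using assms by simp
  then show ?thesis using pmf_embed_pmf[of w] assms(2) by blast
qed

lemma cara_reduce:
  fixes \<Lambda> :: "'a pmf" and q :: "'a \<Rightarrow> 'b pmf" and \<phi> \<delta> :: "'a \<Rightarrow> real"
  assumes fL: "finite L"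
  shows "finite (set_pmf \<Lambda>) \<Longrightarrow> (\<And>a. a \<in> set_pmf \<Lambda> \<Longrightarrow> set_pmf (q a) \<subseteq> L) \<Longrightarrow>
    \<exists>\<Lambda>2. set_pmf \<Lambda>2 \<subseteq> set_pmf \<Lambda> \<and> card (set_pmf \<Lambda>2) \<le> card L + 1 \<and> bind_pmf \<Lambda>2 q = bind_pmf \<Lambda> q
     \<and> measure_pmf.expectation \<Lambda> \<phi> \<le> measure_pmf.expectation \<Lambda>2 \<phi>
     \<and> measure_pmf.expectation \<Lambda>2 \<delta> \<le> measure_pmf.expectation \<Lambda> \<delta>"
proof (induction "card (set_pmf \<Lambda>)" arbitrary: \<Lambda> rule: less_induct)
  case less
  let ?S = "set_pmf \<Lambda>"
  have fS: "finite ?S" by fact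
  have qL: "\<And>a. a \<in> ?S \<Longrightarrow> set_pmf (q a) \<subseteq> L" by fact
  show ?case
  proof (cases "card ?S \<le> card L + 1")
    case True
    then show ?thesis by (intro exI[of _ \<Lambda>]) auto
  next
    case False
    define E where "E = insert None (Some ` L)"
    define c where "c e a = (case e of None \<Rightarrow> \<delta> a | Some us \<Rightarrow> pmf (q a) us)" for e a
    have fE: "finite E" unfolding E_def using fL by simp
    have cE: "card E = card L + 1" unfolding E_def using fL by (simp add: card_image)
    have "card E < card ?S" using False cE by simp
    from lin_dep[OF fE fS this, of c] obtain \<mu> where
      \<mu>: "\<exists>a\<in>?S. \<mu> a \<noteq> 0" "\<forall>a. a \<notin> ?S \<longrightarrow> \<mu> a = 0" "\<forall>e\<in>E. (\<Sum>a\<in>?S. c e a * \<mu> a) = 0" by blast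
    define \<nu> where "\<nu> = (if (\<Sum>a\<in>?S. \<mu> a * \<phi> a) \<ge> 0 then \<mu> else (\<lambda>a. - \<mu> a))"
    have \<nu>1: "\<exists>a\<in>?S. \<nu> a \<noteq> 0" using \<mu>(1) by (auto simp: \<nu>_def)
    have \<nu>2: "\<And>a. a \<notin> ?S \<Longrightarrow> \<nu> a = 0" using \<mu>(2) by (auto simp: \<nu>_def)
    have \<nu>3: "\<And>e. e \<in> E \<Longrightarrow> (\<Sum>a\<in>?S. c e a * \<nu> a) = 0"
      using \<mu>(3) by (auto simp: \<nu>_def sum_negf)
    have \<nu>4: "(\<Sum>a\<in>?S. \<nu> a * \<phi> a) \<ge> 0"
      by (auto simp: \<nu>_def sum_negf)
    have \<nu>L: "(\<Sum>a\<in>?S. pmf (q a) us * \<nu> a) = 0" if "us \<in> L" for us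
      using \<nu>3[of "Some us"] that by (simp add: E_def c_def)
    have \<nu>D: "(\<Sum>a\<in>?S. \<delta> a * \<nu> a) = 0"
      using \<nu>3[of None] by (simp add: E_def c_def)
    have \<nu>0: "(\<Sum>a\<in>?S. \<nu> a) = 0"
    proof -
      have "(\<Sum>a\<in>?S. \<nu> a) = (\<Sum>a\<in>?S. \<nu> a * (\<Sum>us\<in>L. pmf (q a) us))"
        by (intro sum.cong refl) (simp add: sum_pmf_eq_1[OF fL qL])
      also have "\<dots> = (\<Sum>us\<in>L. \<Sum>a\<in>?S. pmf (q a) us * \<nu> a)"
        by (subst sum.swap) (simp add: sum_distrib_left mult.commute)
      also have "\<dots> = 0" using \<nu>L by simp
      finally show ?thesis .
    qed
    have "\<exists>a\<in>?S. \<nu> a < 0"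
    proof (rule ccontr)
      assume "\<not> ?thesis"
      then have "\<forall>a\<in>?S. 0 \<le> \<nu> a" by auto
      with \<nu>0 have "\<forall>a\<in>?S. \<nu> a = 0" using sum_nonneg_eq_0_iff[OF fS] by blast
      with \<nu>1 show False by blast
    qed
    define N where "N = {a\<in>?S. \<nu> a < 0}"
    have fN: "finite N" and neN: "N \<noteq> {}" unfolding N_def using fS \<open>\<exists>a\<in>?S. \<nu> a < 0\<close> by auto
    define t where "t = Min ((\<lambda>a. pmf \<Lambda> a / (- \<nu> a)) ` N)"
    have "t \<in> (\<lambda>a. pmf \<Lambda> a / (- \<nu> a)) ` N" unfolding t_def using fN neN by (intro Min_in) auto
    then obtain a0 where a0: "a0 \<in> N" "t = pmf \<Lambda> a0 / (- \<nu> a0)" by blast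
    have tle: "t \<le> pmf \<Lambda> a / (- \<nu> a)" if "a \<in> N" for a
      unfolding t_def using fN that by (intro Min_le) auto
    have tpos: "0 < t"
    proof -
      have "0 < pmf \<Lambda> a0" "0 < - \<nu> a0" using a0 by (auto simp: N_def pmf_positive)
      then show ?thesis using a0(2) by (metis divide_pos_pos)
    qed
    define w where "w a = pmf \<Lambda> a + t * \<nu> a" for a
    have w0: "0 \<le> w a" for a
    proof (cases "a \<in> N")
      case True
      then have "t * (- \<nu> a) \<le> pmf \<Lambda> a" using tle[OF True] by (auto simp: N_def field_simps)
      then show ?thesis by (simp add: w_def)
    next
      case False
      then have "a \<notin> ?S \<or> \<nu> a \<ge> 0" by (auto simp: N_def)
      then show ?thesis using \<nu>2 tpos by (auto simp: w_def set_pmf_eq)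
    qed
    have wout: "w a = 0" if "a \<notin> ?S" for a using that \<nu>2 by (simp add: w_def set_pmf_eq)
    have wa0: "w a0 = 0" using a0 by (simp add: w_def N_def)
    have sw: "sum w ?S = 1"
      using \<nu>0 by (simp add: w_def sum.distrib sum_pmf_eq_1[OF fS] sum_distrib_left[symmetric])
    obtain \<Lambda>' where \<Lambda>': "\<And>a. pmf \<Lambda>' a = w a" using pmf_of_weights[OF fS w0 wout sw] by blast
    have sub: "set_pmf \<Lambda>' \<subseteq> ?S - {a0}"
      using wout wa0 by (auto simp: set_pmf_eq \<Lambda>')
    have sub': "set_pmf \<Lambda>' \<subseteq> ?S" using sub by auto
    have a0S: "a0 \<in> ?S" using a0 by (simp add: N_def)
    have cardlt: "card (set_pmf \<Lambda>') < card ?S"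
      by (rule psubset_card_mono[OF fS]) (use sub a0S in auto)
    have fS': "finite (set_pmf \<Lambda>')" using sub' fS finite_subset by blast
    have bindeq: "bind_pmf \<Lambda>' q = bind_pmf \<Lambda> q"
    proof (rule pmf_eqI)
      fix us
      have "pmf (bind_pmf \<Lambda>' q) us = (\<Sum>a\<in>?S. w a * pmf (q a) us)"
        unfolding \<Lambda>'[symmetric] by (rule pmf_bind_sum_super[OF fS sub'])
      also have "\<dots> = (\<Sum>a\<in>?S. pmf \<Lambda> a * pmf (q a) us) + t * (\<Sum>a\<in>?S. pmf (q a) us * \<nu> a)"
        by (simp add: w_def sum.distrib sum_distrib_left algebra_simps)
      also have "(\<Sum>a\<in>?S. pmf (q a) us * \<nu> a) = 0"
      proof (cases "us \<in> L")
        case True then show ?thesis by (rule \<nu>L)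
      next
        case False
        then have "\<And>a. a \<in> ?S \<Longrightarrow> pmf (q a) us = 0" using qL by (auto simp: set_pmf_eq)
        then show ?thesis by simp
      qed
      also have "(\<Sum>a\<in>?S. pmf \<Lambda> a * pmf (q a) us) = pmf (bind_pmf \<Lambda> q) us"
        by (rule pmf_bind_sum_super[OF fS subset_refl, symmetric])
      finally show "pmf (bind_pmf \<Lambda>' q) us = pmf (bind_pmf \<Lambda> q) us" by simp
    qed
    have ex': "measure_pmf.expectation \<Lambda>' f = measure_pmf.expectation \<Lambda> f + t * (\<Sum>a\<in>?S. f a * \<nu> a)" for f
      unfolding exp_sum_super[OF fS sub'] exp_sum_super[OF fS subset_refl] \<Lambda>'
      by (simp add: w_def sum.distrib sum_distrib_left algebra_simps)
    have ephi: "measure_pmf.expectation \<Lambda> \<phi> \<le> measure_pmf.expectation \<Lambda>' \<phi>"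
      unfolding ex' using \<nu>4 tpos by (simp add: mult.commute)
    have edelta: "measure_pmf.expectation \<Lambda>' \<delta> = measure_pmf.expectation \<Lambda> \<delta>"
      unfolding ex' using \<nu>D by simp
    from less.hyps[OF cardlt fS'] qL sub' obtain \<Lambda>2 where
      L2: "set_pmf \<Lambda>2 \<subseteq> set_pmf \<Lambda>'" "card (set_pmf \<Lambda>2) \<le> card L + 1" "bind_pmf \<Lambda>2 q = bind_pmf \<Lambda>' q"
        "measure_pmf.expectation \<Lambda>' \<phi> \<le> measure_pmf.expectation \<Lambda>2 \<phi>"
        "measure_pmf.expectation \<Lambda>2 \<delta> \<le> measure_pmf.expectation \<Lambda>' \<delta>"
      by blast
    show ?thesis
      by (rule exI[of _ \<Lambda>2]) (use L2 sub' bindeq ephi edelta in auto)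
  qed
qed

definition wzj :: "'u list pmf \<Rightarrow> ('u \<Rightarrow> 'w pmf) \<Rightarrow> ('u list \<Rightarrow> 'a pmf) \<Rightarrow> ('u list \<times> 'a \<times> 'w list) pmf" where
  "wzj Uh Ch K = bind_pmf Uh (\<lambda>us. bind_pmf (K us) (\<lambda>a. map_pmf (\<lambda>ws. (us, a, ws)) (prod_chan Ch us)))"

lemma wz_joint_eq: "wz_joint Uh Ch K = wzj Uh Ch K"
  by (simp add: wz_joint_def wzj_def)

definition rateT :: "('u list \<times> 'a \<times> 'w list) pmf \<Rightarrow> real" where
  "rateT T = mutual_info (map_pmf (\<lambda>(us, a, ws). (us, a)) T) - mutual_info (map_pmf (\<lambda>(us, a, ws). (ws, a)) T)"

lemma wz_rate_eq: "wz_rate Uh Ch l K = rateT (wzj Uh Ch K) / real l"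
  by (simp add: wz_rate_def rateT_def wz_joint_eq)

lemma wz_distortion_eq: "wz_distortion Uh Ch rho K G =
   measure_pmf.expectation (wzj Uh Ch K) (\<lambda>(us, a, ws). block_dist rho us (G a ws))"
  by (simp add: wz_distortion_def wz_joint_eq)

lemma set_prod_chan: "set_pmf (prod_chan Ch us) \<subseteq> {ws. length ws = length us}"
  by (induction us) auto

lemma fin_prod_chan: "finite (set_pmf (prod_chan (Ch :: 'u \<Rightarrow> 'w::finite pmf) us))"
  by (rule finite_subset[OF set_prod_chan]) (use finite_lists_length_eq[of "UNIV::'w set" "length us"] in simp)

abbreviation "tU \<equiv> (\<lambda>t :: 'u list \<times> 'a \<times> 'w list. fst t)"
abbreviation "tA \<equiv> (\<lambda>t :: 'u list \<times> 'a \<times> 'w list. fst (snd t))"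
abbreviation "tW \<equiv> (\<lambda>t :: 'u list \<times> 'a \<times> 'w list. snd (snd t))"

lemma rateT_H:
  fixes T :: "('u list \<times> 'a \<times> 'w list) pmf"
  assumes fin: "finite (set_pmf T)"
  shows "rateT T = H T tU + H T tA - H T (\<lambda>t. (tU t, tA t))
     - (H T tW + H T tA - H T (\<lambda>t. (tW t, tA t)))"
proof -
  have e1: "(\<lambda>(us, a, ws). (us, a)) = (\<lambda>t :: 'u list \<times> 'a \<times> 'w list. (tU t, tA t))" by auto
  have e2: "(\<lambda>(us, a, ws). (ws, a)) = (\<lambda>t :: 'u list \<times> 'a \<times> 'w list. (tW t, tA t))" by auto
  show ?thesis unfolding rateT_def e1 e2 mi_H[OF fin] ..
qed

lemma wzj_tag:
  "wzj Uh Ch K = bind_pmf Uh (\<lambda>us. map_pmf (Pair us) (pair_pmf (K us) (prod_chan Ch us)))"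
  unfolding wzj_def pair_pmf_def map_pmf_def
  by (simp add: bind_assoc_pmf bind_return_pmf)

lemma fin_wzj:
  fixes Ch :: "'u \<Rightarrow> 'w::finite pmf"
  assumes "finite (set_pmf Uh)" "\<And>us. finite (set_pmf (K us))"
  shows "finite (set_pmf (wzj Uh Ch K))"
  unfolding wzj_tag using assms fin_prod_chan by (intro finite_set_pmf_tag) auto

lemma rateT_cmi:
  fixes Ch :: "'u \<Rightarrow> 'w::finite pmf"
  assumes fU: "finite (set_pmf Uh)" and fK: "\<And>us. finite (set_pmf (K us))"
  defines "T \<equiv> wzj Uh Ch K"
  shows "rateT T = H T (\<lambda>t. (tU t, tW t)) + H T (\<lambda>t. (tW t, tA t)) - H T (\<lambda>t. (tU t, tA t, tW t)) - H T tW"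
    and "rateT T \<ge> 0"
proof -
  have fin: "finite (set_pmf T)" unfolding T_def by (rule fin_wzj[OF fU fK])
  have id: "map_pmf (\<lambda>t. (tU t, tA t, tW t)) T = T" by (simp add: map_pmf_ident[unfolded id_def])
  have mk: "H T (\<lambda>t. (tU t, tA t, tW t)) + H T tU = H T (\<lambda>t. (tU t, tA t)) + H T (\<lambda>t. (tU t, tW t))"
    by (rule H_ci[OF fin _ fU fK fin_prod_chan]) (simp add: id T_def wzj_tag)
  show r: "rateT T = H T (\<lambda>t. (tU t, tW t)) + H T (\<lambda>t. (tW t, tA t)) - H T (\<lambda>t. (tU t, tA t, tW t)) - H T tW"
    unfolding rateT_H[OF fin] using mk by simp
  have sm: "H T (\<lambda>t. (tW t, tU t, tA t)) + H T tW \<le> H T (\<lambda>t. (tW t, tU t)) + H T (\<lambda>t. (tW t, tA t))"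
    by (rule H_submod[OF fin])
  have q1: "H T (\<lambda>t. (tW t, tU t, tA t)) = H T (\<lambda>t. (tU t, tA t, tW t))"
    by (rule H_equiv[OF fin, where f="\<lambda>(u,a,w). (w,u,a)" and g="\<lambda>(w,u,a). (u,a,w)"]) auto
  have q2: "H T (\<lambda>t. (tW t, tU t)) = H T (\<lambda>t. (tU t, tW t))"
    by (rule H_equiv[OF fin, where f="\<lambda>(u,w). (w,u)" and g="\<lambda>(w,u). (u,w)"]) auto
  show "rateT T \<ge> 0" unfolding r using sm q1 q2 by simp
qed

definition Tq :: "('u \<Rightarrow> 'w pmf) \<Rightarrow> 'a pmf \<Rightarrow> ('a \<Rightarrow> 'u list pmf) \<Rightarrow> ('u list \<times> 'a \<times> 'w list) pmf" where
  "Tq Ch \<Lambda> q = bind_pmf \<Lambda> (\<lambda>a. bind_pmf (q a) (\<lambda>us. map_pmf (\<lambda>ws. (us, a, ws)) (prod_chan Ch us)))"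

definition phiq :: "('u \<Rightarrow> 'w pmf) \<Rightarrow> ('a \<Rightarrow> 'u list pmf) \<Rightarrow> 'a \<Rightarrow> real" where
  "phiq Ch q a = ent (q a) - ent (bind_pmf (q a) (prod_chan Ch))"

definition deltaq :: "('u \<Rightarrow> 'w pmf) \<Rightarrow> ('u \<Rightarrow> 'v \<Rightarrow> real) \<Rightarrow> ('a \<Rightarrow> 'u list pmf)
    \<Rightarrow> ('a \<Rightarrow> 'w list \<Rightarrow> nat \<Rightarrow> 'v) \<Rightarrow> 'a \<Rightarrow> real" where
  "deltaq Ch rho q G a = measure_pmf.expectation (bind_pmf (q a) (\<lambda>us. map_pmf (Pair us) (prod_chan Ch us)))
      (\<lambda>(us, ws). block_dist rho us (G a ws))"

lemma rate_formula:
  fixes Ch :: "'u \<Rightarrow> 'w::finite pmf"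
  assumes f\<Lambda>: "finite (set_pmf \<Lambda>)" and fq: "\<And>a. finite (set_pmf (q a))"
  shows "rateT (Tq Ch \<Lambda> q) = ent (bind_pmf \<Lambda> q) - ent (bind_pmf (bind_pmf \<Lambda> q) (prod_chan Ch))
     - measure_pmf.expectation \<Lambda> (phiq Ch q)"
proof -
  let ?T = "Tq Ch \<Lambda> q"
  have fin: "finite (set_pmf ?T)" unfolding Tq_def using f\<Lambda> fq fin_prod_chan by auto
  have mU: "map_pmf tU ?T = bind_pmf \<Lambda> q"
    unfolding Tq_def by (simp add: map_bind_pmf pmf.map_comp o_def bind_return_pmf')
  have mW: "map_pmf tW ?T = bind_pmf (bind_pmf \<Lambda> q) (prod_chan Ch)"
    unfolding Tq_def by (simp add: map_bind_pmf pmf.map_comp o_def bind_assoc_pmf)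
  have mAU: "map_pmf (\<lambda>t. (tA t, tU t)) ?T = bind_pmf \<Lambda> (\<lambda>a. map_pmf (Pair a) (q a))"
    unfolding Tq_def by (simp add: map_bind_pmf pmf.map_comp o_def bind_return_pmf' map_pmf_def[symmetric]
       flip: map_pmf_def)
  have Talt: "?T = bind_pmf \<Lambda> (\<lambda>a. map_pmf (\<lambda>(us, ws). (us, a, ws))
                  (bind_pmf (q a) (\<lambda>us. map_pmf (Pair us) (prod_chan Ch us))))"
    unfolding Tq_def by (simp add: map_bind_pmf pmf.map_comp o_def)
  have e1: "map_pmf (\<lambda>t. (tA t, tW t)) (map_pmf (\<lambda>(us, ws). (us, a, ws)) B) = map_pmf (Pair a) (map_pmf snd B)"
    for a :: 'a and B :: "('u list \<times> 'w list) pmf"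
    by (simp add: pmf.map_comp o_def case_prod_beta)
  have e2: "map_pmf snd (bind_pmf (q a) (\<lambda>us. map_pmf (Pair us) (prod_chan Ch us))) = bind_pmf (q a) (prod_chan Ch)" for a
    by (simp add: map_bind_pmf pmf.map_comp o_def)
  have mAW: "map_pmf (\<lambda>t. (tA t, tW t)) ?T = bind_pmf \<Lambda> (\<lambda>a. map_pmf (Pair a) (bind_pmf (q a) (prod_chan Ch)))"
    by (simp add: Talt map_bind_pmf e1 pmf.map_comp o_def)
  have fb: "\<And>a. finite (set_pmf (bind_pmf (q a) (prod_chan Ch)))" using fq fin_prod_chan by auto
  have hAU: "H ?T (\<lambda>t. (tA t, tU t)) = H ?T tA + (\<Sum>a\<in>set_pmf \<Lambda>. pmf \<Lambda> a * ent (q a))"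
    and hA: "H ?T tA = ent \<Lambda>"
    using H_tag[OF fin mAU f\<Lambda> fq] by auto
  have hAW: "H ?T (\<lambda>t. (tA t, tW t)) = H ?T tA + (\<Sum>a\<in>set_pmf \<Lambda>. pmf \<Lambda> a * ent (bind_pmf (q a) (prod_chan Ch)))"
    using H_tag[OF fin mAW f\<Lambda> fb] by auto
  have s1: "H ?T (\<lambda>t. (tU t, tA t)) = H ?T (\<lambda>t. (tA t, tU t))"
    by (rule H_equiv[OF fin, where f="\<lambda>(a,u). (u,a)" and g="\<lambda>(u,a). (a,u)"]) auto
  have s2: "H ?T (\<lambda>t. (tW t, tA t)) = H ?T (\<lambda>t. (tA t, tW t))"
    by (rule H_equiv[OF fin, where f="\<lambda>(a,u). (u,a)" and g="\<lambda>(u,a). (a,u)"]) auto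
  have ephi: "measure_pmf.expectation \<Lambda> (phiq Ch q) = (\<Sum>a\<in>set_pmf \<Lambda>. pmf \<Lambda> a * ent (q a))
      - (\<Sum>a\<in>set_pmf \<Lambda>. pmf \<Lambda> a * ent (bind_pmf (q a) (prod_chan Ch)))"
    unfolding exp_sum[OF f\<Lambda>] phiq_def by (simp add: sum_subtractf algebra_simps)
  show ?thesis unfolding rateT_H[OF fin] s1 s2 hAU hAW ephi
    unfolding H_def mU mW by simp
qed

lemma dist_formula:
  fixes Ch :: "'u \<Rightarrow> 'w::finite pmf"
  assumes f\<Lambda>: "finite (set_pmf \<Lambda>)" and fq: "\<And>a. finite (set_pmf (q a))"
  shows "measure_pmf.expectation (Tq Ch \<Lambda> q) (\<lambda>(us, a, ws). block_dist rho us (G a ws))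
     = measure_pmf.expectation \<Lambda> (deltaq Ch rho q G)"
proof -
  have "Tq Ch \<Lambda> q = bind_pmf \<Lambda> (\<lambda>a. map_pmf (\<lambda>(us, ws). (us, a, ws))
                  (bind_pmf (q a) (\<lambda>us. map_pmf (Pair us) (prod_chan Ch us))))"
    unfolding Tq_def by (simp add: map_bind_pmf pmf.map_comp o_def)
  then have "measure_pmf.expectation (Tq Ch \<Lambda> q) (\<lambda>(us, a, ws). block_dist rho us (G a ws))
     = (\<Sum>a\<in>set_pmf \<Lambda>. pmf \<Lambda> a * measure_pmf.expectation (map_pmf (\<lambda>(us, ws). (us, a, ws))
                  (bind_pmf (q a) (\<lambda>us. map_pmf (Pair us) (prod_chan Ch us)))) (\<lambda>(us, a, ws). block_dist rho us (G a ws)))"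
    by (simp only:) (rule exp_bind[OF f\<Lambda>], use fq fin_prod_chan in \<open>auto intro!: finite_imageI\<close>)
  also have "\<dots> = (\<Sum>a\<in>set_pmf \<Lambda>. pmf \<Lambda> a * deltaq Ch rho q G a)"
    unfolding deltaq_def integral_map_pmf by (intro sum.cong refl) (simp add: case_prod_unfold)
  finally show ?thesis unfolding exp_sum[OF f\<Lambda>] .
qed

lemma flip_cond:
  fixes J :: "('a \<times> 'b) pmf"
  shows "bind_pmf (map_pmf snd J) (\<lambda>b. map_pmf (\<lambda>a. (a, b)) (map_pmf fst (cond_pmf J {t. snd t = b}))) = J"
proof -
  have "bind_pmf (map_pmf snd J) (\<lambda>b. map_pmf (\<lambda>a. (a, b)) (map_pmf fst (cond_pmf J {t. snd t = b})))
      = bind_pmf J (\<lambda>t. map_pmf (\<lambda>a. (a, snd t)) (map_pmf fst (cond_pmf J {t'. snd t' = snd t})))"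
    by (simp add: bind_map_pmf)
  also have "\<dots> = bind_pmf J (\<lambda>t. cond_pmf J {t'. snd t' = snd t})"
  proof (intro bind_pmf_cong refl)
    fix t assume t: "t \<in> set_pmf J"
    have ne: "set_pmf J \<inter> {t'. snd t' = snd t} \<noteq> {}" using t by auto
    have "map_pmf (\<lambda>a. (a, snd t)) (map_pmf fst (cond_pmf J {t'. snd t' = snd t}))
        = map_pmf id (cond_pmf J {t'. snd t' = snd t})"
      unfolding pmf.map_comp by (intro map_pmf_cong refl) (use set_cond_pmf[OF ne] in auto)
    then show "map_pmf (\<lambda>a. (a, snd t)) (map_pmf fst (cond_pmf J {t'. snd t' = snd t})) = cond_pmf J {t'. snd t' = snd t}"
      by simp
  qed
  also have "\<dots> = J"
    by (rule bind_cond_pmf_cancel[where R="\<lambda>t t'. snd t' = snd t"]) (auto intro!: arg_cong[where f="measure J"])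
  finally show ?thesis .
qed

lemma wzj_flip:
  assumes Uh: "map_pmf snd J = Uh"
  shows "wzj Uh Ch (\<lambda>us. if us \<in> set_pmf Uh then map_pmf fst (cond_pmf J {t. snd t = us}) else return_pmf k0)
       = bind_pmf J (\<lambda>(a, us). map_pmf (\<lambda>ws. (us, a, ws)) (prod_chan Ch us))"
proof -
  let ?K = "\<lambda>us. if us \<in> set_pmf Uh then map_pmf fst (cond_pmf J {t. snd t = us}) else return_pmf k0"
  have "wzj Uh Ch ?K = bind_pmf (bind_pmf Uh (\<lambda>us. map_pmf (\<lambda>a. (a, us)) (?K us)))
        (\<lambda>(a, us). map_pmf (\<lambda>ws. (us, a, ws)) (prod_chan Ch us))"
    unfolding wzj_def by (simp add: bind_assoc_pmf bind_map_pmf)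
  also have "bind_pmf Uh (\<lambda>us. map_pmf (\<lambda>a. (a, us)) (?K us))
      = bind_pmf Uh (\<lambda>us. map_pmf (\<lambda>a. (a, us)) (map_pmf fst (cond_pmf J {t. snd t = us})))"
    by (intro bind_pmf_cong refl) simp
  also have "\<dots> = J" using flip_cond[of J] Uh by simp
  finally show ?thesis .
qed

lemma Tq_J: "Tq Ch \<Lambda> q = bind_pmf (bind_pmf \<Lambda> (\<lambda>a. map_pmf (Pair a) (q a)))
        (\<lambda>(a, us). map_pmf (\<lambda>ws. (us, a, ws)) (prod_chan Ch us))"
  unfolding Tq_def by (simp add: bind_assoc_pmf bind_map_pmf)

lemma exp_cong_supp:
  "(\<And>x. x \<in> set_pmf p \<Longrightarrow> f x = g x) \<Longrightarrow> measure_pmf.expectation p f = measure_pmf.expectation p g"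
  by (intro integral_cong_AE) (auto simp: AE_measure_pmf_iff)

lemma wz_reduce:
  fixes Ch :: "'u::finite \<Rightarrow> 'w::finite pmf" and \<Lambda> :: "'a pmf" and q :: "'a \<Rightarrow> 'u list pmf"
    and G :: "'a \<Rightarrow> 'w list \<Rightarrow> nat \<Rightarrow> 'v"
  assumes f\<Lambda>: "finite (set_pmf \<Lambda>)" and qL: "\<And>a. set_pmf (q a) \<subseteq> {xs. length xs = l}"
  shows "\<exists>K G'. (\<forall>us. set_pmf (K us) \<subseteq> {0..<CARD('u) ^ l + 1})
     \<and> rateT (wzj (bind_pmf \<Lambda> q) Ch K) \<le> rateT (Tq Ch \<Lambda> q)
     \<and> measure_pmf.expectation (wzj (bind_pmf \<Lambda> q) Ch K) (\<lambda>(us, a, ws). block_dist rho us (G' a ws))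
       \<le> measure_pmf.expectation (Tq Ch \<Lambda> q) (\<lambda>(us, a, ws). block_dist rho us (G a ws))"
proof -
  define L :: "'u list set" where "L = {xs. length xs = l}"
  have LL: "L = {xs. set xs \<subseteq> UNIV \<and> length xs = l}" unfolding L_def by simp
  have fL: "finite L" unfolding LL by (rule finite_lists_length_eq) simp
  have cL: "card L = CARD('u) ^ l" unfolding LL by (rule card_lists_length_eq) simp
  have fq: "\<And>a. finite (set_pmf (q a))" using qL fL finite_subset unfolding L_def by blast
  obtain \<Lambda>2 where L2: "set_pmf \<Lambda>2 \<subseteq> set_pmf \<Lambda>" "card (set_pmf \<Lambda>2) \<le> card L + 1"
    "bind_pmf \<Lambda>2 q = bind_pmf \<Lambda> q"
    "measure_pmf.expectation \<Lambda> (phiq Ch q) \<le> measure_pmf.expectation \<Lambda>2 (phiq Ch q)"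
    "measure_pmf.expectation \<Lambda>2 (deltaq Ch rho q G) \<le> measure_pmf.expectation \<Lambda> (deltaq Ch rho q G)"
    using cara_reduce[OF fL f\<Lambda>, of q "phiq Ch q" "deltaq Ch rho q G"] qL unfolding L_def by blast
  define S2 where "S2 = set_pmf \<Lambda>2"
  have fS2: "finite S2" unfolding S2_def using L2(1) f\<Lambda> finite_subset by blast
  obtain h where h: "bij_betw h {0..<card S2} S2" using ex_bij_betw_nat_finite[OF fS2] by blast
  define hinv where "hinv = the_inv_into {0..<card S2} h"
  have hinv_bij: "bij_betw hinv S2 {0..<card S2}" unfolding hinv_def by (rule bij_betw_the_inv_into[OF h])
  have hh: "\<And>a. a \<in> S2 \<Longrightarrow> h (hinv a) = a" unfolding hinv_def
    using h by (simp add: f_the_inv_into_f_bij_betw)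
  define \<Lambda>' where "\<Lambda>' = map_pmf hinv \<Lambda>2"
  define q' where "q' i = q (h i)" for i
  define G' where "G' i = G (h i)" for i
  have f\<Lambda>': "finite (set_pmf \<Lambda>')" unfolding \<Lambda>'_def using fS2 by (simp add: S2_def)
  have fq': "\<And>i. finite (set_pmf (q' i))" unfolding q'_def by (rule fq)
  have set\<Lambda>': "set_pmf \<Lambda>' \<subseteq> {0..<card L + 1}"
  proof -
    have "set_pmf \<Lambda>' = hinv ` S2" unfolding \<Lambda>'_def S2_def by simp
    also have "\<dots> = {0..<card S2}" using hinv_bij by (simp add: bij_betw_def)
    also have "\<dots> \<subseteq> {0..<card L + 1}" using L2(2) by (auto simp: S2_def)
    finally show ?thesis .
  qed
  have bq: "bind_pmf \<Lambda>' q' = bind_pmf \<Lambda> q"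
  proof -
    have "bind_pmf \<Lambda>' q' = bind_pmf \<Lambda>2 (\<lambda>a. q (h (hinv a)))"
      unfolding \<Lambda>'_def q'_def by (simp add: bind_map_pmf)
    also have "\<dots> = bind_pmf \<Lambda>2 q" by (intro bind_pmf_cong refl) (simp add: hh S2_def)
    finally show ?thesis using L2(3) by simp
  qed
  have ephi: "measure_pmf.expectation \<Lambda>' (phiq Ch q') = measure_pmf.expectation \<Lambda>2 (phiq Ch q)"
    unfolding \<Lambda>'_def integral_map_pmf
    by (rule exp_cong_supp) (simp add: phiq_def q'_def hh S2_def)
  have edel: "measure_pmf.expectation \<Lambda>' (deltaq Ch rho q' G') = measure_pmf.expectation \<Lambda>2 (deltaq Ch rho q G)"
    unfolding \<Lambda>'_def integral_map_pmf
    by (rule exp_cong_supp) (simp add: deltaq_def q'_def G'_def hh S2_def)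
  define J where "J = bind_pmf \<Lambda>' (\<lambda>i. map_pmf (Pair i) (q' i))"
  define Uh where "Uh = bind_pmf \<Lambda> q"
  have mJ: "map_pmf snd J = Uh" unfolding J_def Uh_def bq[symmetric]
    by (simp add: map_bind_pmf pmf.map_comp o_def)
  define K where "K us = (if us \<in> set_pmf Uh then map_pmf fst (cond_pmf J {t. snd t = us}) else return_pmf 0)" for us
  have "wzj Uh Ch K = bind_pmf J (\<lambda>(a, us). map_pmf (\<lambda>ws. (us, a, ws)) (prod_chan Ch us))"
    unfolding K_def by (rule wzj_flip[OF mJ])
  then have KT: "wzj Uh Ch K = Tq Ch \<Lambda>' q'" by (simp add: Tq_J J_def)
  have Ksub: "set_pmf (K us) \<subseteq> {0..<CARD('u) ^ l + 1}" for us
  proof (cases "us \<in> set_pmf Uh")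
    case True
    then obtain t where t: "t \<in> set_pmf J" "snd t = us" using mJ[symmetric] by auto
    have ne: "set_pmf J \<inter> {t. snd t = us} \<noteq> {}" using t by auto
    have "set_pmf (K us) \<subseteq> fst ` set_pmf J" using True set_cond_pmf[OF ne] by (auto simp: K_def)
    also have "\<dots> \<subseteq> set_pmf \<Lambda>'" unfolding J_def by auto
    finally show ?thesis using set\<Lambda>' cL by auto
  qed (simp add: K_def)
  show ?thesis
  proof (intro exI[of _ K] exI[of _ G'] conjI allI)
    show "set_pmf (K us) \<subseteq> {0..<CARD('u) ^ l + 1}" for us by (rule Ksub)
    show "rateT (wzj (bind_pmf \<Lambda> q) Ch K) \<le> rateT (Tq Ch \<Lambda> q)"
      unfolding Uh_def[symmetric] KT rate_formula[OF f\<Lambda>' fq'] rate_formula[OF f\<Lambda> fq] bq ephi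
      using L2(4) by simp
    show "measure_pmf.expectation (wzj (bind_pmf \<Lambda> q) Ch K) (\<lambda>(us, a, ws). block_dist rho us (G' a ws))
       \<le> measure_pmf.expectation (Tq Ch \<Lambda> q) (\<lambda>(us, a, ws). block_dist rho us (G a ws))"
      unfolding Uh_def[symmetric] KT dist_formula[OF f\<Lambda>' fq'] dist_formula[OF f\<Lambda> fq] edel
      using L2(5) .
  qed
qed

lemma H_map: "H (map_pmf V P) f = H P (\<lambda>\<omega>. f (V \<omega>))"
  unfolding H_def by (simp add: pmf.map_comp o_def)

lemma shannon_main:
  assumes fin: "finite (set_pmf P)" and hU: "\<And>\<omega>. \<omega> \<in> set_pmf P \<Longrightarrow> U \<omega> = fu (B \<omega>)"
    and ci: "H P (\<lambda>\<omega>. (B \<omega>, (W \<omega>, Z \<omega>), Y \<omega>)) + H P B = H P (\<lambda>\<omega>. (B \<omega>, (W \<omega>, Z \<omega>))) + H P (\<lambda>\<omega>. (B \<omega>, Y \<omega>))"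
  shows "H P U + H P (\<lambda>\<omega>. (Z \<omega>, Y \<omega>)) - H P (\<lambda>\<omega>. (U \<omega>, (Z \<omega>, Y \<omega>)))
      - (H P W + H P (\<lambda>\<omega>. (Z \<omega>, Y \<omega>)) - H P (\<lambda>\<omega>. (W \<omega>, (Z \<omega>, Y \<omega>))))
      \<le> H P Z + H P B + H P Y - H P (\<lambda>\<omega>. (B \<omega>, Y \<omega>))"
proof -
  have s1: "H P (\<lambda>\<omega>. (U \<omega>, W \<omega>, (Z \<omega>, Y \<omega>))) + H P U \<le> H P (\<lambda>\<omega>. (U \<omega>, W \<omega>)) + H P (\<lambda>\<omega>. (U \<omega>, (Z \<omega>, Y \<omega>)))"
    by (rule H_submod[OF fin])
  have s2: "H P (\<lambda>\<omega>. (U \<omega>, W \<omega>)) \<le> H P (\<lambda>\<omega>. (U \<omega>, Z \<omega>, W \<omega>))"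
    by (rule H_det_le[OF fin, where f="\<lambda>(u,z,w). (u,w)"]) auto
  have e3: "H P (\<lambda>\<omega>. (W \<omega>, (Z \<omega>, Y \<omega>))) = H P (\<lambda>\<omega>. (Y \<omega>, (Z \<omega>, W \<omega>)))"
    by (rule H_equiv[OF fin, where f="\<lambda>(y,z,w). (w,z,y)" and g="\<lambda>(w,z,y). (y,z,w)"]) auto
  have e4: "H P (\<lambda>\<omega>. (U \<omega>, W \<omega>, (Z \<omega>, Y \<omega>))) = H P (\<lambda>\<omega>. ((U \<omega>, Z \<omega>, W \<omega>), Y \<omega>))"
    by (rule H_equiv[OF fin, where f="\<lambda>((u,z,w),y). (u,w,z,y)" and g="\<lambda>(u,w,z,y). ((u,z,w),y)"]) auto
  have s4: "H P (\<lambda>\<omega>. ((U \<omega>, Z \<omega>, W \<omega>), B \<omega>, Y \<omega>)) + H P (\<lambda>\<omega>. (U \<omega>, Z \<omega>, W \<omega>))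
      \<le> H P (\<lambda>\<omega>. ((U \<omega>, Z \<omega>, W \<omega>), B \<omega>)) + H P (\<lambda>\<omega>. ((U \<omega>, Z \<omega>, W \<omega>), Y \<omega>))"
    by (rule H_submod[OF fin])
  have e5: "H P (\<lambda>\<omega>. ((U \<omega>, Z \<omega>, W \<omega>), B \<omega>, Y \<omega>)) = H P (\<lambda>\<omega>. (B \<omega>, (W \<omega>, Z \<omega>), Y \<omega>))"
    by (rule H_equiv[OF fin, where f="\<lambda>(b,(w,z),y). ((fu b, z, w), b, y)" and g="\<lambda>((u,z,w),b,y). (b,(w,z),y)"])
       (use hU in auto)
  have e6: "H P (\<lambda>\<omega>. ((U \<omega>, Z \<omega>, W \<omega>), B \<omega>)) = H P (\<lambda>\<omega>. (B \<omega>, (W \<omega>, Z \<omega>)))"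
    by (rule H_equiv[OF fin, where f="\<lambda>(b,(w,z)). ((fu b, z, w), b)" and g="\<lambda>((u,z,w),b). (b,(w,z))"])
       (use hU in auto)
  have s7: "H P (\<lambda>\<omega>. (Y \<omega>, (Z \<omega>, W \<omega>))) \<le> H P Y + H P (\<lambda>\<omega>. (Z \<omega>, W \<omega>))"
    by (rule H_subadd[OF fin])
  have s8: "H P (\<lambda>\<omega>. (Z \<omega>, W \<omega>)) \<le> H P Z + H P W"
    by (rule H_subadd[OF fin])
  show ?thesis using s1 s2 e3 e4 s4 e5 e6 s7 s8 ci by linarith
qed

lemma disint: "bind_pmf (map_pmf f M) (\<lambda>c. cond_pmf M {x. f x = c}) = M"
  unfolding bind_map_pmf
  by (rule bind_cond_pmf_cancel[where R="\<lambda>x y. f y = f x"]) (auto intro!: arg_cong[where f="measure M"])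

lemma markov_fun:
  assumes fin: "finite (set_pmf P)"
    and eq: "map_pmf (\<lambda>\<omega>. (B \<omega>, Y \<omega>)) P = bind_pmf M (\<lambda>b. map_pmf (Pair b) (Qf (f b)))"
    and fM: "finite (set_pmf M)" and fQ: "\<And>c. finite (set_pmf (Qf c))"
  shows "H P B + H P Y - H P (\<lambda>\<omega>. (B \<omega>, Y \<omega>)) = H P (\<lambda>\<omega>. f (B \<omega>)) + H P Y - H P (\<lambda>\<omega>. (f (B \<omega>), Y \<omega>))"
proof -
  obtain b0 where "b0 \<in> set_pmf M" using set_pmf_not_empty by fast
  define K1 where "K1 c = (if c \<in> f ` set_pmf M then cond_pmf M {x. f x = c} else return_pmf b0)" for c
  have fK1: "finite (set_pmf (K1 c))" for c
  proof (cases "c \<in> f ` set_pmf M")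
    case True
    then have ne: "set_pmf M \<inter> {x. f x = c} \<noteq> {}" by auto
    show ?thesis using True fM by (simp add: K1_def set_cond_pmf[OF ne])
  qed (simp add: K1_def)
  have "map_pmf (\<lambda>\<omega>. (f (B \<omega>), B \<omega>, Y \<omega>)) P = map_pmf (\<lambda>(b, y). (f b, b, y)) (map_pmf (\<lambda>\<omega>. (B \<omega>, Y \<omega>)) P)"
    by (simp add: pmf.map_comp o_def)
  also have "\<dots> = bind_pmf M (\<lambda>b. map_pmf (\<lambda>y. (f b, b, y)) (Qf (f b)))"
    unfolding eq by (simp add: map_bind_pmf pmf.map_comp o_def)
  also have "\<dots> = bind_pmf (map_pmf f M) (\<lambda>c. bind_pmf (cond_pmf M {x. f x = c}) (\<lambda>b. map_pmf (\<lambda>y. (f b, b, y)) (Qf (f b))))"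
    by (subst (1) disint[of f M, symmetric]) (simp add: bind_assoc_pmf)
  also have "\<dots> = bind_pmf (map_pmf f M) (\<lambda>c. map_pmf (Pair c) (pair_pmf (K1 c) (Qf c)))"
  proof (intro bind_pmf_cong refl)
    fix c assume c: "c \<in> set_pmf (map_pmf f M)"
    then have ne: "set_pmf M \<inter> {x. f x = c} \<noteq> {}" by auto
    have K: "K1 c = cond_pmf M {x. f x = c}" using c by (simp add: K1_def)
    have "bind_pmf (cond_pmf M {x. f x = c}) (\<lambda>b. map_pmf (\<lambda>y. (f b, b, y)) (Qf (f b)))
        = bind_pmf (cond_pmf M {x. f x = c}) (\<lambda>b. map_pmf (\<lambda>y. (c, b, y)) (Qf c))"
      by (intro bind_pmf_cong refl) (use set_cond_pmf[OF ne] in auto)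
    also have "\<dots> = map_pmf (Pair c) (pair_pmf (K1 c) (Qf c))"
      unfolding K pair_pmf_def map_pmf_def by (simp add: bind_assoc_pmf bind_return_pmf)
    finally show "bind_pmf (cond_pmf M {x. f x = c}) (\<lambda>b. map_pmf (\<lambda>y. (f b, b, y)) (Qf (f b)))
        = map_pmf (Pair c) (pair_pmf (K1 c) (Qf c))" .
  qed
  finally have T: "map_pmf (\<lambda>\<omega>. (f (B \<omega>), B \<omega>, Y \<omega>)) P = bind_pmf (map_pmf f M) (\<lambda>c. map_pmf (Pair c) (pair_pmf (K1 c) (Qf c)))" .
  have ci: "H P (\<lambda>\<omega>. (f (B \<omega>), B \<omega>, Y \<omega>)) + H P (\<lambda>\<omega>. f (B \<omega>))
      = H P (\<lambda>\<omega>. (f (B \<omega>), B \<omega>)) + H P (\<lambda>\<omega>. (f (B \<omega>), Y \<omega>))"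
    by (rule H_ci[OF fin T _ fK1 fQ]) (use fM in simp)
  have e1: "H P (\<lambda>\<omega>. (f (B \<omega>), B \<omega>, Y \<omega>)) = H P (\<lambda>\<omega>. (B \<omega>, Y \<omega>))"
    by (rule H_equiv[OF fin, where f="\<lambda>(b,y). (f b, b, y)" and g="\<lambda>(c,b,y). (b,y)"]) auto
  have e2: "H P (\<lambda>\<omega>. (f (B \<omega>), B \<omega>)) = H P B"
    by (rule H_equiv[OF fin, where f="\<lambda>b. (f b, b)" and g="snd"]) auto
  show ?thesis using ci e1 e2 by linarith
qed

lemma ent_return: "ent (return_pmf a) = 0" by (simp add: ent_def)

lemma ent_prod_chan:
  fixes Ch :: "'x \<Rightarrow> 'y::finite pmf"
  shows "ent (prod_chan Ch xs) = (\<Sum>j<length xs. ent (Ch (xs ! j)))"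
proof (induction xs)
  case Nil
  then show ?case by (simp add: ent_return)
next
  case (Cons a as)
  have fa: "finite (set_pmf (Ch a))" by simp
  have "prod_chan Ch (a # as) = map_pmf (\<lambda>(w, ws). w # ws) (bind_pmf (Ch a) (\<lambda>w. map_pmf (Pair w) (prod_chan Ch as)))"
    by (simp add: map_bind_pmf pmf.map_comp o_def)
  then have "ent (prod_chan Ch (a # as)) = ent (bind_pmf (Ch a) (\<lambda>w. map_pmf (Pair w) (prod_chan Ch as)))"
    by (simp, intro ent_inj) (auto simp: inj_on_def intro!: finite_imageI fin_prod_chan)
  also have "\<dots> = ent (Ch a) + (\<Sum>w\<in>set_pmf (Ch a). pmf (Ch a) w * ent (prod_chan Ch as))"
    by (rule ent_tag[OF fa]) (simp add: fin_prod_chan)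
  also have "\<dots> = ent (Ch a) + ent (prod_chan Ch as)"
    by (simp add: sum_distrib_right[symmetric] sum_pmf_eq_1[OF fa])
  finally show ?case using Cons by (simp only: length_Cons sum.lessThan_Suc_shift) simp
qed

lemma nth_prod_chan: "j < length xs \<Longrightarrow> map_pmf (\<lambda>ys. ys ! j) (prod_chan Ch xs) = Ch (xs ! j)"
proof (induction xs arbitrary: j)
  case Nil then show ?case by simp
next
  case (Cons a as)
  show ?case
  proof (cases j)
    case 0
    then show ?thesis by (simp add: map_bind_pmf pmf.map_comp o_def map_pmf_def[symmetric] bind_return_pmf')
  next
    case (Suc j')
    then have "j' < length as" using Cons by simp
    then show ?thesis using Suc Cons.IH by (simp add: map_bind_pmf pmf.map_comp o_def bind_pmf_const)
  qed
qed

lemma H_list_subadd: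
  assumes fin: "finite (set_pmf P)"
  shows "(\<And>\<omega>. \<omega> \<in> set_pmf P \<Longrightarrow> length (V \<omega>) = k) \<Longrightarrow> H P V \<le> (\<Sum>j<k. H P (\<lambda>\<omega>. V \<omega> ! j))"
proof (induction k arbitrary: V)
  case 0
  show ?case using H_le_card[OF fin, of "{[]}" V] 0 by simp
next
  case (Suc k)
  have "H P V = H P (\<lambda>\<omega>. (hd (V \<omega>), tl (V \<omega>)))"
    by (rule H_equiv[OF fin, where g="\<lambda>v. (hd v, tl v)" and f="\<lambda>(h,t). h # t"]) (use Suc.prems in \<open>fastforce simp: length_Suc_conv\<close>)+
  also have "\<dots> \<le> H P (\<lambda>\<omega>. hd (V \<omega>)) + H P (\<lambda>\<omega>. tl (V \<omega>))" by (rule H_subadd[OF fin])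
  also have "H P (\<lambda>\<omega>. hd (V \<omega>)) = H P (\<lambda>\<omega>. V \<omega> ! 0)"
  proof (rule H_cong)
    fix \<omega> assume "\<omega> \<in> set_pmf P"
    then have "length (V \<omega>) = Suc k" by (rule Suc.prems)
    then show "hd (V \<omega>) = V \<omega> ! 0" by (cases "V \<omega>") auto
  qed
  also have "H P (\<lambda>\<omega>. tl (V \<omega>)) \<le> (\<Sum>j<k. H P (\<lambda>\<omega>. tl (V \<omega>) ! j))"
    by (rule Suc.IH) (use Suc.prems in auto)
  also have "(\<Sum>j<k. H P (\<lambda>\<omega>. tl (V \<omega>) ! j)) = (\<Sum>j<k. H P (\<lambda>\<omega>. V \<omega> ! Suc j))"
    by (intro sum.cong refl, rule H_cong) (use Suc.prems in \<open>auto simp: nth_tl\<close>)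
  finally show ?case by (simp only: sum.lessThan_Suc_shift)
qed

lemma mi_chan:
  fixes P :: "'x pmf" and Ch :: "'x \<Rightarrow> 'y::finite pmf"
  assumes fP: "finite (set_pmf P)"
  shows "mutual_info (chan_joint P Ch) = ent (bind_pmf P Ch) - measure_pmf.expectation P (\<lambda>x. ent (Ch x))"
proof -
  have fC: "finite (set_pmf (chan_joint P Ch))" unfolding chan_joint_def
    by (rule finite_set_pmf_tag[OF fP]) simp
  have m1: "map_pmf fst (chan_joint P Ch) = P" unfolding chan_joint_def by (rule map_fst_tag)
  have m2: "map_pmf snd (chan_joint P Ch) = bind_pmf P Ch" unfolding chan_joint_def
    by (simp add: map_bind_pmf pmf.map_comp o_def)
  have e: "ent (chan_joint P Ch) = ent P + (\<Sum>x\<in>set_pmf P. pmf P x * ent (Ch x))"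
    unfolding chan_joint_def by (rule ent_tag[OF fP]) simp
  show ?thesis unfolding mi_ent[OF fC] m1 m2 e exp_sum[OF fP] by simp
qed

lemma ent_concave:
  assumes fM: "finite (set_pmf M)" and fF: "\<And>j. finite (set_pmf (F j))"
  shows "(\<Sum>j\<in>set_pmf M. pmf M j * ent (F j)) \<le> ent (bind_pmf M F)"
proof -
  let ?T = "bind_pmf M (\<lambda>j. map_pmf (Pair j) (F j))"
  have fT: "finite (set_pmf ?T)" by (rule finite_set_pmf_tag[OF fM fF])
  have "H ?T (\<lambda>t. (fst t, snd t)) \<le> H ?T fst + H ?T snd" by (rule H_subadd[OF fT])
  moreover have "H ?T (\<lambda>t. (fst t, snd t)) = ent M + (\<Sum>j\<in>set_pmf M. pmf M j * ent (F j))"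
    unfolding H_def by (simp add: ent_tag[OF fM fF])
  moreover have "H ?T fst = ent M" unfolding H_def map_fst_tag ..
  moreover have "H ?T snd = ent (bind_pmf M F)" unfolding H_def
    by (simp add: map_bind_pmf pmf.map_comp o_def)
  ultimately show ?thesis by simp
qed

lemma cap_bound:
  fixes Mx :: "'x list pmf" and Ch :: "'x \<Rightarrow> 'y::finite pmf"
  assumes fM: "finite (set_pmf Mx)" and len: "\<And>xs. xs \<in> set_pmf Mx \<Longrightarrow> length xs = l"
  shows "mutual_info (bind_pmf Mx (\<lambda>xs. map_pmf (Pair xs) (prod_chan Ch xs)))
     \<le> (\<Sum>j<l. mutual_info (chan_joint (map_pmf (\<lambda>xs. xs ! j) Mx) Ch))"
proof -
  let ?T = "bind_pmf Mx (\<lambda>xs. map_pmf (Pair xs) (prod_chan Ch xs))"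
  have fT: "finite (set_pmf ?T)" by (rule finite_set_pmf_tag[OF fM]) (simp add: fin_prod_chan)
  have m1: "map_pmf fst ?T = Mx" by (rule map_fst_tag)
  have eT: "ent ?T = ent Mx + (\<Sum>xs\<in>set_pmf Mx. pmf Mx xs * ent (prod_chan Ch xs))"
    by (rule ent_tag[OF fM]) (simp add: fin_prod_chan)
  have lenT: "length (snd t) = l" if "t \<in> set_pmf ?T" for t
    using that set_prod_chan len by fastforce
  have "ent (map_pmf snd ?T) = H ?T snd" by (simp add: H_def)
  also have "\<dots> \<le> (\<Sum>j<l. H ?T (\<lambda>t. snd t ! j))" by (rule H_list_subadd[OF fT lenT])
  also have "\<dots> = (\<Sum>j<l. ent (bind_pmf (map_pmf (\<lambda>xs. xs ! j) Mx) Ch))"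
  proof (intro sum.cong refl)
    fix j assume j: "j \<in> {..<l}"
    have "map_pmf (\<lambda>t. snd t ! j) ?T = bind_pmf Mx (\<lambda>xs. map_pmf (\<lambda>ys. ys ! j) (prod_chan Ch xs))"
      by (simp add: map_bind_pmf pmf.map_comp o_def)
    also have "\<dots> = bind_pmf Mx (\<lambda>xs. Ch (xs ! j))"
      by (intro bind_pmf_cong refl nth_prod_chan) (use j len in auto)
    also have "\<dots> = bind_pmf (map_pmf (\<lambda>xs. xs ! j) Mx) Ch" by (simp add: bind_map_pmf)
    finally show "H ?T (\<lambda>t. snd t ! j) = ent (bind_pmf (map_pmf (\<lambda>xs. xs ! j) Mx) Ch)" by (simp add: H_def)
  qed
  finally have hY: "ent (map_pmf snd ?T) \<le> (\<Sum>j<l. ent (bind_pmf (map_pmf (\<lambda>xs. xs ! j) Mx) Ch))" .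
  have "(\<Sum>xs\<in>set_pmf Mx. pmf Mx xs * ent (prod_chan Ch xs))
      = (\<Sum>xs\<in>set_pmf Mx. \<Sum>j<l. pmf Mx xs * ent (Ch (xs ! j)))"
    by (intro sum.cong refl) (simp add: ent_prod_chan len sum_distrib_left)
  also have "\<dots> = (\<Sum>j<l. measure_pmf.expectation (map_pmf (\<lambda>xs. xs ! j) Mx) (\<lambda>x. ent (Ch x)))"
    by (subst sum.swap) (simp add: integral_map_pmf exp_sum[OF fM])
  finally have hYX: "(\<Sum>xs\<in>set_pmf Mx. pmf Mx xs * ent (prod_chan Ch xs))
      = (\<Sum>j<l. measure_pmf.expectation (map_pmf (\<lambda>xs. xs ! j) Mx) (\<lambda>x. ent (Ch x)))" .
  have mij: "mutual_info (chan_joint (map_pmf (\<lambda>xs. xs ! j) Mx) Ch)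
     = ent (bind_pmf (map_pmf (\<lambda>xs. xs ! j) Mx) Ch) - measure_pmf.expectation (map_pmf (\<lambda>xs. xs ! j) Mx) (\<lambda>x. ent (Ch x))" for j
    by (rule mi_chan) (use fM in simp)
  show ?thesis unfolding mi_ent[OF fT] m1 eT mij sum_subtractf hYX[symmetric] using hY by simp
qed

lemma mi_concave:
  fixes Pj :: "nat \<Rightarrow> 'x pmf" and Ch :: "'x \<Rightarrow> 'y::finite pmf"
  assumes l: "l > 0" and fP: "\<And>j. finite (set_pmf (Pj j))"
  shows "(\<Sum>j<l. mutual_info (chan_joint (Pj j) Ch)) \<le> real l * mutual_info (chan_joint (bind_pmf (pmf_of_set {..<l}) Pj) Ch)"
proof -
  let ?U = "pmf_of_set {..<l::nat}"
  have ne: "{..<l} \<noteq> {}" using l by auto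
  have sU: "set_pmf ?U = {..<l}" by (rule set_pmf_of_set[OF ne]) simp
  have pU: "\<And>j. j \<in> {..<l} \<Longrightarrow> pmf ?U j = 1 / real l" using pmf_of_set[OF ne] by simp
  have fU: "finite (set_pmf ?U)" unfolding sU by simp
  have fB: "finite (set_pmf (bind_pmf ?U Pj))" using fU fP by simp
  have "(\<Sum>j\<in>set_pmf ?U. pmf ?U j * ent (bind_pmf (Pj j) Ch)) \<le> ent (bind_pmf ?U (\<lambda>j. bind_pmf (Pj j) Ch))"
    by (rule ent_concave[OF fU]) (use fP in simp)
  also have "bind_pmf ?U (\<lambda>j. bind_pmf (Pj j) Ch) = bind_pmf (bind_pmf ?U Pj) Ch" by (simp add: bind_assoc_pmf)
  finally have c1: "(\<Sum>j<l. ent (bind_pmf (Pj j) Ch)) / real l \<le> ent (bind_pmf (bind_pmf ?U Pj) Ch)"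
    unfolding sU by (simp add: pU sum_divide_distrib)
  have c2: "measure_pmf.expectation (bind_pmf ?U Pj) (\<lambda>x. ent (Ch x))
      = (\<Sum>j<l. measure_pmf.expectation (Pj j) (\<lambda>x. ent (Ch x))) / real l"
    by (subst exp_bind[OF fU]) (use fP in \<open>simp_all add: sU pU sum_divide_distrib\<close>)
  have "(\<Sum>j<l. mutual_info (chan_joint (Pj j) Ch))
      = (\<Sum>j<l. ent (bind_pmf (Pj j) Ch)) - (\<Sum>j<l. measure_pmf.expectation (Pj j) (\<lambda>x. ent (Ch x)))"
    by (simp add: mi_chan[OF fP] sum_subtractf)
  also have "\<dots> \<le> real l * ent (bind_pmf (bind_pmf ?U Pj) Ch)
      - real l * measure_pmf.expectation (bind_pmf ?U Pj) (\<lambda>x. ent (Ch x))"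
    using c1 l unfolding c2 by (simp add: field_simps)
  also have "\<dots> = real l * mutual_info (chan_joint (bind_pmf ?U Pj) Ch)"
    by (simp add: mi_chan[OF fB] right_diff_distrib)
  finally show ?thesis .
qed

lemma mi_le_log:
  fixes P :: "'x::finite pmf" and Ch :: "'x \<Rightarrow> 'y::finite pmf"
  shows "mutual_info (chan_joint P Ch) \<le> log 2 (real CARD('x))"
proof -
  have fP: "finite (set_pmf P)" by simp
  have fC: "finite (set_pmf (chan_joint P Ch))" unfolding chan_joint_def
    by (rule finite_set_pmf_tag[OF fP]) simp
  have m1: "map_pmf fst (chan_joint P Ch) = P" unfolding chan_joint_def by (rule map_fst_tag)
  have "ent (map_pmf snd (chan_joint P Ch)) \<le> ent (chan_joint P Ch)" by (rule ent_map_le[OF fC])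
  moreover have "ent P \<le> log 2 (real CARD('x))" by (rule ent_le_card) auto
  ultimately show ?thesis unfolding mi_ent[OF fC] m1 by simp
qed

lemma mi_le_capacity:
  fixes P :: "'x::finite pmf" and Ch :: "'x \<Rightarrow> 'y::finite pmf"
  assumes "measure_pmf.expectation P phi \<le> Gam"
  shows "mutual_info (chan_joint P Ch) \<le> capacity_cost Ch phi Gam"
  unfolding capacity_cost_def
proof (rule cSup_upper)
  show "mutual_info (chan_joint P Ch) \<in> {mutual_info (chan_joint P Ch) |P. measure_pmf.expectation P phi \<le> Gam}"
    using assms by blast
  show "bdd_above {mutual_info (chan_joint P Ch) |P. measure_pmf.expectation P phi \<le> Gam}"
    by (rule bdd_aboveI[of _ "log 2 (real CARD('x))"]) (auto intro: mi_le_log)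
qed

lemma block_Pi:
  "map_pmf (\<lambda>f. map (\<lambda>j. f (a + j)) [1..<k+1]) (Pi_pmf {a+1..a+k} dflt (\<lambda>i. Ch (u i)))
     = prod_chan Ch (map (\<lambda>j. u (a + j)) [1..<k+1])"
proof (induction k arbitrary: a)
  case 0
  then show ?case by simp
next
  case (Suc k)
  have I: "{a+1..a+Suc k} = insert (a+1) {(a+1)+1..(a+1)+k}" by auto
  have L: "[1..<Suc k+1] = 1 # map Suc [1..<k+1]"
    by (simp add: upt_conv_Cons map_Suc_upt del: upt_Suc)
  have blk: "map (\<lambda>j. (f(a+1 := y)) (a + j)) [1..<Suc k+1] = y # map (\<lambda>j. f ((a+1) + j)) [1..<k+1]"
    for f y
    unfolding L by auto
  have blk2: "map (\<lambda>j. if j = Suc 0 then y else f (a + j)) [Suc 0..<Suc (Suc k)] = y # map (\<lambda>j. f (Suc (a + j))) [Suc 0..<Suc k]"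
    for f y
    using L by auto
  have "map_pmf (\<lambda>f. map (\<lambda>j. f (a + j)) [1..<Suc k+1]) (Pi_pmf {a+1..a+Suc k} dflt (\<lambda>i. Ch (u i)))
      = map_pmf (\<lambda>(y, f). y # map (\<lambda>j. f ((a+1) + j)) [1..<k+1])
          (pair_pmf (Ch (u (a+1))) (Pi_pmf {(a+1)+1..(a+1)+k} dflt (\<lambda>i. Ch (u i))))"
  proof -
    have eqI: "Pi_pmf (insert (a+1) {(a+1)+1..(a+1)+k}) dflt (\<lambda>i. Ch (u i))
        = map_pmf (\<lambda>(y,f). f(a+1 := y)) (pair_pmf (Ch (u (a+1))) (Pi_pmf {(a+1)+1..(a+1)+k} dflt (\<lambda>i. Ch (u i))))"
      by (rule Pi_pmf_insert) auto
    show ?thesis unfolding I eqI pmf.map_comp o_def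
      apply (intro map_pmf_cong refl)
      apply (simp add: case_prod_unfold del: upt_Suc)
      apply (rule blk2)
      done
  qed
  also have "\<dots> = bind_pmf (Ch (u (a+1))) (\<lambda>y. map_pmf (Cons y)
       (map_pmf (\<lambda>f. map (\<lambda>j. f ((a+1) + j)) [1..<k+1]) (Pi_pmf {(a+1)+1..(a+1)+k} dflt (\<lambda>i. Ch (u i)))))"
    unfolding pair_pmf_def map_pmf_def by (simp add: bind_assoc_pmf bind_return_pmf)
  also have "\<dots> = prod_chan Ch (u (a+1) # map (\<lambda>j. u ((a+1) + j)) [1..<k+1])"
    unfolding Suc.IH by simp
  also have "u (a+1) # map (\<lambda>j. u ((a+1) + j)) [1..<k+1] = map (\<lambda>j. u (a + j)) [1..<Suc k+1]"
    unfolding L by simp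
  finally show ?case .
qed

lemma run_fsm_cong:
  "(\<And>j. 1 \<le> j \<Longrightarrow> j \<le> k \<Longrightarrow> step j = step' j) \<Longrightarrow> run_fsm step z k = run_fsm step' z k"
  by (induction k) auto

lemma run_fsm_shift:
  "run_fsm step z (a + k) = run_fsm (\<lambda>j s. step (a + j) s) (run_fsm step z a) k"
  by (induction k) auto

lemma run_fsm_inv:
  assumes "z < s" "\<And>j z. z < s \<Longrightarrow> step j z < s"
  shows "run_fsm step z k < s"
  using assms by (induction k) auto

lemma indep_resample:
  "bind_pmf (pair_pmf (pair_pmf A C) E) (\<lambda>((a0, c), e). map_pmf (\<lambda>a. F a c e) A)
     = map_pmf (\<lambda>((a, c), e). F a c e) (pair_pmf (pair_pmf A C) E)"
proof -
  have "bind_pmf (pair_pmf (pair_pmf A C) E) (\<lambda>((a0, c), e). map_pmf (\<lambda>a. F a c e) A)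
      = bind_pmf C (\<lambda>c. bind_pmf E (\<lambda>e. bind_pmf A (\<lambda>a. return_pmf (F a c e))))"
    unfolding pair_pmf_def map_pmf_def by (simp add: bind_assoc_pmf bind_return_pmf bind_pmf_const)
  also have "\<dots> = bind_pmf C (\<lambda>c. bind_pmf A (\<lambda>a. bind_pmf E (\<lambda>e. return_pmf (F a c e))))"
    by (subst bind_commute_pmf[of E A]) rule
  also have "\<dots> = bind_pmf A (\<lambda>a. bind_pmf C (\<lambda>c. bind_pmf E (\<lambda>e. return_pmf (F a c e))))"
    by (rule bind_commute_pmf)
  also have "\<dots> = map_pmf (\<lambda>((a, c), e). F a c e) (pair_pmf (pair_pmf A C) E)"
    unfolding pair_pmf_def map_pmf_def by (simp add: bind_assoc_pmf bind_return_pmf)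
  finally show ?thesis .
qed

lemma pair_rearr:
  "map_pmf (\<lambda>((a, b), (c, e)). ((f a, g b e), h c)) (pair_pmf (pair_pmf A B) (pair_pmf C D))
    = pair_pmf (pair_pmf (map_pmf f A) (map_pmf (\<lambda>(b, e). g b e) (pair_pmf B D))) (map_pmf h C)"
proof -
  have "map_pmf (\<lambda>((a, b), (c, e)). ((f a, g b e), h c)) (pair_pmf (pair_pmf A B) (pair_pmf C D))
     = bind_pmf A (\<lambda>a. bind_pmf B (\<lambda>b. bind_pmf C (\<lambda>c. bind_pmf D (\<lambda>e. return_pmf ((f a, g b e), h c)))))"
    unfolding pair_pmf_def map_pmf_def by (simp add: bind_assoc_pmf bind_return_pmf)
  also have "\<dots> = bind_pmf A (\<lambda>a. bind_pmf B (\<lambda>b. bind_pmf D (\<lambda>e. bind_pmf C (\<lambda>c. return_pmf ((f a, g b e), h c)))))"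
    by (subst bind_commute_pmf[of C D]) rule
  also have "\<dots> = pair_pmf (pair_pmf (map_pmf f A) (map_pmf (\<lambda>(b, e). g b e) (pair_pmf B D))) (map_pmf h C)"
    unfolding pair_pmf_def map_pmf_def by (simp add: bind_assoc_pmf bind_return_pmf)
  finally show ?thesis .
qed

lemma fin_Pi:
  assumes "finite A" "\<And>i. finite (set_pmf (p i))"
  shows "finite (set_pmf (Pi_pmf A dflt p))"
  by (rule finite_subset[OF set_Pi_pmf_subset'[OF assms(1)]]) (use assms in auto)

locale proc =
  fixes n l :: nat and u :: "nat \<Rightarrow> 'u::finite" and x :: "nat \<Rightarrow> 'x::finite"
    and PWU :: "'u \<Rightarrow> 'w::finite pmf" and PYX :: "'x \<Rightarrow> 'y::finite pmf"
    and g' :: "nat \<Rightarrow> 'w \<Rightarrow> 'y \<Rightarrow> nat \<Rightarrow> nat" and z1d :: nat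
  assumes l_pos: "l > 0" and l_dvd: "l dvd n" and n_pos: "n > 0"
begin

definition "m = n div l"
definition "N = noise_dist n PWU PYX u x"
definition "Unif = pmf_of_set {0..<m}"
definition "P = pair_pmf Unif N"
definition "Zb b w y = dec_state l g' z1d w y (b*l+1)"
definition "Ib b = {b*l+1..b*l+l}"
definition "Rb b = {1..n} - Ib b"
definition "PWn = (\<lambda>i. PWU (u i))"
definition "PYn = (\<lambda>i. PYX (x i))"
definition "Lz b = map_pmf (\<lambda>(gw, gy). Zb b gw gy)
   (pair_pmf (Pi_pmf (Rb b) undefined PWn) (Pi_pmf (Rb b) undefined PYn))"
definition "PCW b = prod_chan PWU (block u l b)"
definition "PCY b = prod_chan PYX (block x l b)"
definition "Q = bind_pmf Unif (\<lambda>b. map_pmf (Pair b) (pair_pmf (pair_pmf (PCW b) (Lz b)) (PCY b)))"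
definition "q4 \<omega> = (fst \<omega>, ((block (fst (snd \<omega>)) l (fst \<omega>), Zb (fst \<omega>) (fst (snd \<omega>)) (snd (snd \<omega>))),
     block (snd (snd \<omega>)) l (fst \<omega>)))"

lemma n_eq: "n = m * l" using l_dvd by (simp add: m_def)

lemma m_pos: "m > 0" using n_pos n_eq by (cases m) auto

lemma set_Unif: "set_pmf Unif = {0..<m}" unfolding Unif_def using m_pos by simp

lemma fin_Unif: "finite (set_pmf Unif)" unfolding set_Unif by simp

lemma fin_N: "finite (set_pmf N)"
  unfolding N_def noise_dist_def by (auto intro!: fin_Pi)

lemma fin_P: "finite (set_pmf P)" unfolding P_def using fin_Unif fin_N by simp

lemma fin_Lz: "finite (set_pmf (Lz b))"
proof -
  have fR: "finite (Rb b)" by (simp add: Rb_def)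
  have "finite (set_pmf (Pi_pmf (Rb b) undefined PWn))" by (rule fin_Pi[OF fR]) simp
  moreover have "finite (set_pmf (Pi_pmf (Rb b) undefined PYn))" by (rule fin_Pi[OF fR]) simp
  ultimately show ?thesis unfolding Lz_def by simp
qed

lemma fin_Q: "finite (set_pmf Q)"
  unfolding Q_def using fin_Unif fin_Lz by (auto intro!: finite_imageI simp: PCW_def PCY_def fin_prod_chan)

lemma block_merge: "block (\<lambda>i. if i \<in> Ib b then f i else g i) l b = block f l b"
  by (auto simp: block_def Ib_def)

lemma Zb_merge: "Zb b (\<lambda>i. if i \<in> Ib b then f1 i else g1 i) (\<lambda>i. if i \<in> Ib b then f2 i else g2 i) = Zb b g1 g2"
  unfolding Zb_def dec_state_def by (rule run_fsm_cong) (auto simp: Ib_def)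

lemma block_Pi_b: "map_pmf (\<lambda>f. block f l b) (Pi_pmf (Ib b) dflt (\<lambda>i. Ch (u' i))) = prod_chan Ch (block u' l b)"
  unfolding block_def Ib_def using block_Pi[of "b*l" l dflt Ch u'] by simp

lemma decompN:
  assumes b: "b < m"
  shows "map_pmf (\<lambda>(w, y). ((block w l b, Zb b w y), block y l b)) N = pair_pmf (pair_pmf (PCW b) (Lz b)) (PCY b)"
proof -
  have sub: "Ib b \<subseteq> {1..n}"
  proof -
    have "b * l + l \<le> m * l" using b by (metis add.commute mult_Suc less_eq_Suc_le mult_le_mono1)
    then show ?thesis using n_eq by (auto simp: Ib_def)
  qed
  have un: "{1..n} = Ib b \<union> Rb b" using sub by (auto simp: Rb_def)
  have dis: "Ib b \<inter> Rb b = {}" by (auto simp: Rb_def)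
  have fI: "finite (Ib b)" and fR: "finite (Rb b)" by (auto simp: Ib_def Rb_def)
  let ?mer = "\<lambda>(f, g) i. if i \<in> Ib b then f i else g i"
  have PiU: "Pi_pmf {1..n} undefined p = map_pmf ?mer (pair_pmf (Pi_pmf (Ib b) undefined p) (Pi_pmf (Rb b) undefined p))" for p :: "nat \<Rightarrow> 'z pmf"
    unfolding un by (rule Pi_pmf_union[OF fI fR dis])
  have "N = pair_pmf (map_pmf ?mer (pair_pmf (Pi_pmf (Ib b) undefined PWn) (Pi_pmf (Rb b) undefined PWn)))
                     (map_pmf ?mer (pair_pmf (Pi_pmf (Ib b) undefined PYn) (Pi_pmf (Rb b) undefined PYn)))"
    unfolding N_def noise_dist_def PiU PWn_def PYn_def ..
  also have "\<dots> = map_pmf (\<lambda>(a, c). (?mer a, ?mer c))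
      (pair_pmf (pair_pmf (Pi_pmf (Ib b) undefined PWn) (Pi_pmf (Rb b) undefined PWn))
                (pair_pmf (Pi_pmf (Ib b) undefined PYn) (Pi_pmf (Rb b) undefined PYn)))"
    by (rule map_pair[symmetric])
  finally have NN: "N = \<dots>" .
  have "map_pmf (\<lambda>(w, y). ((block w l b, Zb b w y), block y l b)) N
      = map_pmf (\<lambda>((fw, gw), (fy, gy)). ((block fw l b, Zb b gw gy), block fy l b))
      (pair_pmf (pair_pmf (Pi_pmf (Ib b) undefined PWn) (Pi_pmf (Rb b) undefined PWn))
                (pair_pmf (Pi_pmf (Ib b) undefined PYn) (Pi_pmf (Rb b) undefined PYn)))"
    unfolding NN pmf.map_comp o_def
    by (intro map_pmf_cong refl) (auto simp: block_merge Zb_merge)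
  also have "\<dots> = pair_pmf (pair_pmf (map_pmf (\<lambda>f. block f l b) (Pi_pmf (Ib b) undefined PWn))
       (map_pmf (\<lambda>(gw, gy). Zb b gw gy) (pair_pmf (Pi_pmf (Rb b) undefined PWn) (Pi_pmf (Rb b) undefined PYn))))
       (map_pmf (\<lambda>f. block f l b) (Pi_pmf (Ib b) undefined PYn))"
    by (rule pair_rearr)
  also have "\<dots> = pair_pmf (pair_pmf (PCW b) (Lz b)) (PCY b)"
    unfolding Lz_def PCW_def PCY_def PWn_def PYn_def block_Pi_b ..
  finally show ?thesis .
qed

lemma Q_eq: "Q = map_pmf q4 P"
proof -
  have "map_pmf q4 P = bind_pmf Unif (\<lambda>b. map_pmf (\<lambda>wy. q4 (b, wy)) N)"
    unfolding P_def pair_pmf_def map_pmf_def by (simp add: bind_assoc_pmf bind_return_pmf)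
  also have "\<dots> = bind_pmf Unif (\<lambda>b. map_pmf (Pair b) (map_pmf (\<lambda>(w, y). ((block w l b, Zb b w y), block y l b)) N))"
    by (intro bind_pmf_cong refl) (simp add: pmf.map_comp o_def q4_def case_prod_unfold)
  also have "\<dots> = Q" unfolding Q_def
    by (intro bind_pmf_cong refl) (simp add: decompN set_Unif)
  finally show ?thesis ..
qed

end

lemma sum_blocks:
  fixes m l :: nat and f :: "nat \<Rightarrow> 'a::comm_monoid_add"
  shows "(\<Sum>i\<in>{1..m*l}. f i) = (\<Sum>b<m. \<Sum>j<l. f (b*l+j+1))"
proof -
  have inner: "sum g {b*l..<b*l+l} = (\<Sum>j<l. g (b*l+j))" for g :: "nat \<Rightarrow> 'a" and b :: nat
    using sum.shift_bounds_nat_ivl[of g 0 "b*l" l] by (simp add: add.commute atLeast0LessThan)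
  have "(\<Sum>i\<in>{1..m*l}. f i) = (\<Sum>k<m*l. f (Suc k))"
    using sum.atLeast1_atMost_eq[of f "m*l"] by simp
  also have "\<dots> = (\<Sum>b<m. sum (\<lambda>k. f (Suc k)) {b*l..<b*l+l})" by (rule sum.nat_group[symmetric])
  also have "\<dots> = (\<Sum>b<m. \<Sum>j<l. f (b*l+j+1))" by (simp add: inner)
  finally show ?thesis .
qed

lemma sum_blocks_n:
  fixes m l n :: nat and f :: "nat \<Rightarrow> 'a::comm_monoid_add"
  shows "n = m * l \<Longrightarrow> (\<Sum>i\<in>{1..n}. f i) = (\<Sum>b<m. \<Sum>j<l. f (b*l+j+1))"
  using sum_blocks[where f=f and m=m and l=l] by simp

lemma flip_cond_fst:
  fixes J :: "('a \<times> 'b) pmf"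
  shows "bind_pmf (map_pmf fst J) (\<lambda>a. map_pmf (Pair a) (map_pmf snd (cond_pmf J {t. fst t = a}))) = J"
proof -
  have "bind_pmf (map_pmf fst J) (\<lambda>a. map_pmf (Pair a) (map_pmf snd (cond_pmf J {t. fst t = a})))
      = bind_pmf J (\<lambda>t. map_pmf (Pair (fst t)) (map_pmf snd (cond_pmf J {t'. fst t' = fst t})))"
    by (simp add: bind_map_pmf)
  also have "\<dots> = bind_pmf J (\<lambda>t. cond_pmf J {t'. fst t' = fst t})"
  proof (intro bind_pmf_cong refl)
    fix t assume t: "t \<in> set_pmf J"
    have ne: "set_pmf J \<inter> {t'. fst t' = fst t} \<noteq> {}" using t by auto
    have "map_pmf (Pair (fst t)) (map_pmf snd (cond_pmf J {t'. fst t' = fst t}))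
        = map_pmf id (cond_pmf J {t'. fst t' = fst t})"
      unfolding pmf.map_comp by (intro map_pmf_cong refl) (use set_cond_pmf[OF ne] in auto)
    then show "map_pmf (Pair (fst t)) (map_pmf snd (cond_pmf J {t'. fst t' = fst t})) = cond_pmf J {t'. fst t' = fst t}"
      by simp
  qed
  also have "\<dots> = J"
    by (rule bind_cond_pmf_cancel[where R="\<lambda>t t'. fst t' = fst t"]) (auto intro!: arg_cong[where f="measure J"])
  finally show ?thesis .
qed

context proc begin

definition "qB \<omega> = fst \<omega>"
definition "qW \<omega> = fst (fst (snd \<omega>))"
definition "qZ \<omega> = snd (fst (snd \<omega>))"
definition "qY \<omega> = snd (snd \<omega>)"
definition "qU \<omega> = block u l (fst \<omega>)"
definition "qX \<omega> = block x l (fst \<omega>)"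
definition "JJ = map_pmf (\<lambda>\<omega>. ((qZ \<omega>, qY \<omega>), qU \<omega>)) Q"
definition "LL = map_pmf fst JJ"
definition "qq a = (if a \<in> set_pmf LL then map_pmf snd (cond_pmf JJ {t. fst t = a}) else return_pmf (replicate l undefined))"

lemma length_block [simp]: "length (block v l b) = l" by (simp add: block_def)

lemma block_nth: "j < l \<Longrightarrow> block v l b ! j = v (b*l+j+1)"
  by (simp add: block_def nth_map del: upt_Suc)

lemma fin_LL: "finite (set_pmf LL)" unfolding LL_def JJ_def using fin_Q by simp

lemma JJ_flip: "bind_pmf LL (\<lambda>a. map_pmf (Pair a) (qq a)) = JJ"
proof -
  have "bind_pmf LL (\<lambda>a. map_pmf (Pair a) (qq a)) = bind_pmf LL (\<lambda>a. map_pmf (Pair a) (map_pmf snd (cond_pmf JJ {t. fst t = a})))"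
    by (intro bind_pmf_cong refl) (simp add: qq_def)
  also have "\<dots> = JJ" unfolding LL_def by (rule flip_cond_fst)
  finally show ?thesis .
qed

lemma qq_len: "set_pmf (qq a) \<subseteq> {xs. length xs = l}"
proof (cases "a \<in> set_pmf LL")
  case True
  then have ne: "set_pmf JJ \<inter> {t. fst t = a} \<noteq> {}" by (auto simp: LL_def)
  have "set_pmf (qq a) \<subseteq> snd ` set_pmf JJ" using True set_cond_pmf[OF ne] by (auto simp: qq_def)
  also have "\<dots> \<subseteq> {xs. length xs = l}" by (auto simp: JJ_def qU_def)
  finally show ?thesis .
qed (auto simp: qq_def)

lemma bind_LL_qq: "bind_pmf LL qq = empirical_dist u n l"
proof -
  have "bind_pmf LL qq = map_pmf snd (bind_pmf LL (\<lambda>a. map_pmf (Pair a) (qq a)))"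
    by (simp add: map_bind_pmf pmf.map_comp o_def)
  also have "\<dots> = map_pmf snd JJ" unfolding JJ_flip ..
  also have "\<dots> = map_pmf (\<lambda>b. block u l b) Unif"
    unfolding JJ_def Q_def by (simp add: map_bind_pmf pmf.map_comp o_def qU_def bind_return_pmf'
        flip: map_pmf_def)
  also have "\<dots> = empirical_dist u n l" by (simp add: empirical_dist_def Unif_def m_def)
  finally show ?thesis .
qed

lemma Tq_law: "Tq PWU LL qq = map_pmf (\<lambda>\<omega>. (qU \<omega>, (qZ \<omega>, qY \<omega>), qW \<omega>)) Q"
proof -
  have "Tq PWU LL qq = bind_pmf JJ (\<lambda>(a, us). map_pmf (\<lambda>ws. (us, a, ws)) (prod_chan PWU us))"
    unfolding Tq_J JJ_flip ..
  also have "\<dots> = bind_pmf Unif (\<lambda>b. bind_pmf (pair_pmf (pair_pmf (PCW b) (Lz b)) (PCY b))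
      (\<lambda>((a0, c), e). map_pmf (\<lambda>a. (block u l b, (c, e), a)) (PCW b)))"
    unfolding JJ_def Q_def
    by (simp add: bind_map_pmf bind_assoc_pmf qZ_def qY_def qU_def PCW_def case_prod_unfold)
  also have "\<dots> = bind_pmf Unif (\<lambda>b. map_pmf (\<lambda>((a, c), e). (block u l b, (c, e), a)) (pair_pmf (pair_pmf (PCW b) (Lz b)) (PCY b)))"
    by (simp only: indep_resample)
  also have "\<dots> = map_pmf (\<lambda>\<omega>. (qU \<omega>, (qZ \<omega>, qY \<omega>), qW \<omega>)) Q"
    unfolding Q_def by (simp add: map_bind_pmf pmf.map_comp o_def qZ_def qY_def qU_def qW_def case_prod_unfold)
  finally show ?thesis .
qed

lemma Q_tag: "Q = bind_pmf Unif (\<lambda>b. map_pmf (Pair b) (pair_pmf (pair_pmf (PCW b) (Lz b)) (PCY b)))"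
  by (simp add: Q_def)

lemma map_BY: "map_pmf (\<lambda>\<omega>. (qB \<omega>, qY \<omega>)) Q = bind_pmf Unif (\<lambda>b. map_pmf (Pair b) (prod_chan PYX (block x l b)))"
proof -
  have "map_pmf (\<lambda>\<omega>. (qB \<omega>, qY \<omega>)) Q = bind_pmf Unif (\<lambda>b. map_pmf (Pair b) (map_pmf snd (pair_pmf (pair_pmf (PCW b) (Lz b)) (PCY b))))"
    unfolding Q_def by (simp add: map_bind_pmf pmf.map_comp o_def qB_def qY_def)
  then show ?thesis by (simp add: map_snd_pair_pmf PCY_def)
qed

lemma map_XY: "map_pmf (\<lambda>\<omega>. (block x l (qB \<omega>), qY \<omega>)) Q
    = bind_pmf (map_pmf (\<lambda>b. block x l b) Unif) (\<lambda>xs. map_pmf (Pair xs) (prod_chan PYX xs))"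
proof -
  have "map_pmf (\<lambda>\<omega>. (block x l (qB \<omega>), qY \<omega>)) Q = map_pmf (\<lambda>(b, y). (block x l b, y)) (map_pmf (\<lambda>\<omega>. (qB \<omega>, qY \<omega>)) Q)"
    by (simp add: pmf.map_comp o_def)
  also have "\<dots> = bind_pmf Unif (\<lambda>b. map_pmf (Pair (block x l b)) (prod_chan PYX (block x l b)))"
    unfolding map_BY by (simp add: map_bind_pmf pmf.map_comp o_def)
  also have "\<dots> = bind_pmf (map_pmf (\<lambda>b. block x l b) Unif) (\<lambda>xs. map_pmf (Pair xs) (prod_chan PYX xs))"
    by (simp add: bind_map_pmf)
  finally show ?thesis .
qed

lemma qZ_bound:
  assumes z1: "z1d < sd" and g'inv: "\<forall>t b c z. z < sd \<longrightarrow> g' t b c z < sd"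
  shows "\<omega> \<in> set_pmf Q \<Longrightarrow> qZ \<omega> < sd"
proof -
  assume "\<omega> \<in> set_pmf Q"
  then obtain b gw gy where "qZ \<omega> = Zb b gw gy" by (auto simp: Q_def qZ_def Lz_def)
  also have "Zb b gw gy < sd" unfolding Zb_def dec_state_def
    by (rule run_fsm_inv) (use z1 g'inv in auto)
  finally show ?thesis .
qed

lemma avg_cost:
  "measure_pmf.expectation (bind_pmf (pmf_of_set {..<l}) (\<lambda>j. map_pmf (\<lambda>xs. xs ! j) (map_pmf (\<lambda>b. block x l b) Unif))) phi
    = (\<Sum>i=1..n. phi (x i)) / real n"
proof -
  have ne: "{..<l} \<noteq> {}" using l_pos by auto
  have sU: "set_pmf (pmf_of_set {..<l}) = {..<l}" by (rule set_pmf_of_set[OF ne]) simp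
  have fU: "finite (set_pmf (pmf_of_set {..<l}))" unfolding sU by simp
  have e1: "measure_pmf.expectation (map_pmf (\<lambda>xs. xs ! j) (map_pmf (\<lambda>b. block x l b) Unif)) phi
      = (\<Sum>b<m. phi (x (b*l+j+1))) / real m" if j: "j < l" for j
  proof -
    have "measure_pmf.expectation (map_pmf (\<lambda>xs. xs ! j) (map_pmf (\<lambda>b. block x l b) Unif)) phi
        = measure_pmf.expectation Unif (\<lambda>b. phi (x (b*l+j+1)))"
      unfolding integral_map_pmf by (rule exp_cong_supp) (use j in \<open>simp add: block_nth\<close>)
    also have "\<dots> = (\<Sum>b\<in>{0..<m}. phi (x (b*l+j+1))) / real m"
      unfolding Unif_def using integral_pmf_of_set[of "{0..<m}" "\<lambda>b. phi (x (b*l+j+1))"] m_pos by simp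
    finally show ?thesis by (simp add: atLeast0LessThan)
  qed
  have e1': "measure_pmf.expectation Unif (\<lambda>b. phi (block x l b ! j))
      = (\<Sum>b<m. phi (x (b*l+j+1))) / real m" if j: "j < l" for j
    using e1[OF j] by (simp add: integral_map_pmf)
  have "measure_pmf.expectation (bind_pmf (pmf_of_set {..<l}) (\<lambda>j. map_pmf (\<lambda>xs. xs ! j) (map_pmf (\<lambda>b. block x l b) Unif))) phi
      = (\<Sum>j<l. (1 / real l) * ((\<Sum>b<m. phi (x (b*l+j+1))) / real m))"
  proof -
    have "measure_pmf.expectation (bind_pmf (pmf_of_set {..<l}) (\<lambda>j. map_pmf (\<lambda>xs. xs ! j) (map_pmf (\<lambda>b. block x l b) Unif))) phi
        = (\<Sum>j\<in>set_pmf (pmf_of_set {..<l}). pmf (pmf_of_set {..<l}) j *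
             measure_pmf.expectation (map_pmf (\<lambda>xs. xs ! j) (map_pmf (\<lambda>b. block x l b) Unif)) phi)"
      by (rule exp_bind[OF fU]) (use fin_Unif in simp)
    also have "\<dots> = (\<Sum>j<l. (1 / real l) * ((\<Sum>b<m. phi (x (b*l+j+1))) / real m))"
      unfolding sU by (intro sum.cong refl) (simp add: e1' pmf_of_set[OF ne] integral_map_pmf)
    finally show ?thesis .
  qed
  also have "\<dots> = (\<Sum>j<l. \<Sum>b<m. phi (x (b*l+j+1))) / (real l * real m)"
    unfolding sum_divide_distrib[of _ "{..<l}"] by (intro sum.cong refl) simp
  also have "\<dots> = (\<Sum>b<m. \<Sum>j<l. phi (x (b*l+j+1))) / (real l * real m)"
    by (subst sum.swap) (rule refl)
  also have "\<dots> = (\<Sum>i=1..n. phi (x i)) / real n"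
  proof -
    have "(\<Sum>i=1..n. phi (x i)) = (\<Sum>b<m. \<Sum>j<l. phi (x (b*l+j+1)))"
      by (rule sum_blocks_n[OF n_eq])
    moreover have "real l * real m = real n" using n_eq by (metis of_nat_mult mult.commute)
    ultimately show ?thesis by simp
  qed
  finally show ?thesis .
qed

lemma rate_bound:
  assumes z1: "z1d < sd" and g'inv: "\<forall>t b c z. z < sd \<longrightarrow> g' t b c z < sd"
    and cost: "(\<Sum>i=1..n. phi (x i)) / real n \<le> Gam"
  shows "rateT (Tq PWU LL qq) \<le> log 2 (real sd) + real l * capacity_cost PYX phi Gam"
proof -
  have fQ: "finite (set_pmf Q)" by (rule fin_Q)
  let ?V = "\<lambda>\<omega>. (qU \<omega>, (qZ \<omega>, qY \<omega>), qW \<omega>)"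
  have fT: "finite (set_pmf (map_pmf ?V Q))" using fQ by simp
  have r1: "rateT (Tq PWU LL qq) = H Q qU + H Q (\<lambda>\<omega>. (qZ \<omega>, qY \<omega>)) - H Q (\<lambda>\<omega>. (qU \<omega>, (qZ \<omega>, qY \<omega>)))
      - (H Q qW + H Q (\<lambda>\<omega>. (qZ \<omega>, qY \<omega>)) - H Q (\<lambda>\<omega>. (qW \<omega>, (qZ \<omega>, qY \<omega>))))"
    unfolding Tq_law rateT_H[OF fT] H_map by simp
  have ci: "H Q (\<lambda>\<omega>. (qB \<omega>, (qW \<omega>, qZ \<omega>), qY \<omega>)) + H Q qB
      = H Q (\<lambda>\<omega>. (qB \<omega>, (qW \<omega>, qZ \<omega>))) + H Q (\<lambda>\<omega>. (qB \<omega>, qY \<omega>))"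
  proof (rule H_ci[OF fQ])
    have "map_pmf (\<lambda>\<omega>. (qB \<omega>, (qW \<omega>, qZ \<omega>), qY \<omega>)) Q = map_pmf id Q"
      by (intro map_pmf_cong refl) (auto simp: qB_def qW_def qZ_def qY_def)
    then show "map_pmf (\<lambda>\<omega>. (qB \<omega>, (qW \<omega>, qZ \<omega>), qY \<omega>)) Q
        = bind_pmf Unif (\<lambda>b. map_pmf (Pair b) (pair_pmf (pair_pmf (PCW b) (Lz b)) (PCY b)))"
      by (simp add: Q_def)
    show "finite (set_pmf Unif)" by (rule fin_Unif)
    show "finite (set_pmf (pair_pmf (PCW b) (Lz b)))" for b by (simp add: PCW_def fin_prod_chan fin_Lz)
    show "finite (set_pmf (PCY b))" for b by (simp add: PCY_def fin_prod_chan)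
  qed
  have sh: "rateT (Tq PWU LL qq) \<le> H Q qZ + H Q qB + H Q qY - H Q (\<lambda>\<omega>. (qB \<omega>, qY \<omega>))"
    unfolding r1 by (rule shannon_main[OF fQ _ ci, where fu="\<lambda>b. block u l b"]) (simp add: qU_def qB_def)
  have mk: "H Q qB + H Q qY - H Q (\<lambda>\<omega>. (qB \<omega>, qY \<omega>))
      = H Q (\<lambda>\<omega>. block x l (qB \<omega>)) + H Q qY - H Q (\<lambda>\<omega>. (block x l (qB \<omega>), qY \<omega>))"
    by (rule markov_fun[where Qf="prod_chan PYX" and f="\<lambda>b. block x l b", OF fQ map_BY fin_Unif]) (simp add: fin_prod_chan)
  have "H Q (\<lambda>\<omega>. block x l (qB \<omega>)) + H Q qY - H Q (\<lambda>\<omega>. (block x l (qB \<omega>), qY \<omega>))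
      = mutual_info (bind_pmf (map_pmf (\<lambda>b. block x l b) Unif) (\<lambda>xs. map_pmf (Pair xs) (prod_chan PYX xs)))"
    unfolding map_XY[symmetric] by (rule mi_H[OF fQ, symmetric])
  also have "\<dots> \<le> (\<Sum>j<l. mutual_info (chan_joint (map_pmf (\<lambda>xs. xs ! j) (map_pmf (\<lambda>b. block x l b) Unif)) PYX))"
    by (rule cap_bound) (use fin_Unif in auto)
  also have "\<dots> \<le> real l * mutual_info (chan_joint (bind_pmf (pmf_of_set {..<l})
        (\<lambda>j. map_pmf (\<lambda>xs. xs ! j) (map_pmf (\<lambda>b. block x l b) Unif))) PYX)"
    by (rule mi_concave[OF l_pos]) (use fin_Unif in simp)
  also have "\<dots> \<le> real l * capacity_cost PYX phi Gam"
    by (intro mult_left_mono mi_le_capacity) (use cost avg_cost in auto)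
  finally have cap: "H Q (\<lambda>\<omega>. block x l (qB \<omega>)) + H Q qY - H Q (\<lambda>\<omega>. (block x l (qB \<omega>), qY \<omega>))
      \<le> real l * capacity_cost PYX phi Gam" .
  have hz: "H Q qZ \<le> log 2 (real (card {0..<sd}))"
    by (rule H_le_card[OF fQ]) (use qZ_bound[OF z1 g'inv] in auto)
  show ?thesis using sh mk cap hz by simp
qed

end

definition Gd :: "nat \<Rightarrow> nat \<Rightarrow> (nat \<Rightarrow> 'w \<Rightarrow> 'y \<Rightarrow> nat \<Rightarrow> 'v) \<Rightarrow> (nat \<Rightarrow> 'w \<Rightarrow> 'y \<Rightarrow> nat \<Rightarrow> nat) \<Rightarrow> 'v
    \<Rightarrow> nat \<times> 'y list \<Rightarrow> 'w list \<Rightarrow> nat \<Rightarrow> 'v" where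
  "Gd l d f' g' v0 a ws j = (if j + d < l then f' ((j+1+d) mod l) (ws ! (j+d)) (snd a ! (j+d))
      (run_fsm (\<lambda>k s. g' (k mod l) (ws ! (k-1)) (snd a ! (k-1)) s) (fst a) (j+d)) else v0)"

context proc begin

lemma Gd_dec:
  assumes b: "b < m" and jd: "j + d < l"
  shows "Gd l d f' g' v0 (Zb b w y, block y l b) (block w l b) j = dec_out n l d f' g' z1d vfix w y (b*l+j+1)"
proof -
  have bl: "b * l + l \<le> n" using b n_eq by (metis add.commute mult_Suc less_eq_Suc_le mult_le_mono1)
  have le: "b*l+j+1 + d \<le> n" using bl jd by linarith
  have i: "b*l+j+1+d = b*l + (j+d) + 1" by simp
  have e: "b*l+j+1+d = (j+1+d) + b*l" by simp
  have mod: "(b*l+j+1+d) mod l = (j+1+d) mod l" unfolding e by (rule mod_mult_self1)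
  have ds: "dec_state l g' z1d w y (b*l+j+1+d) = run_fsm (\<lambda>k s. g' (k mod l) (block w l b ! (k-1)) (block y l b ! (k-1)) s) (Zb b w y) (j+d)"
  proof -
    have "dec_state l g' z1d w y (b*l+j+1+d) = run_fsm (\<lambda>k z. g' (k mod l) (w k) (y k) z) z1d (b*l + (j+d))"
      unfolding dec_state_def by (simp add: algebra_simps)
    also have "\<dots> = run_fsm (\<lambda>k' s. g' ((b*l + k') mod l) (w (b*l+k')) (y (b*l+k')) s)
        (run_fsm (\<lambda>k z. g' (k mod l) (w k) (y k) z) z1d (b*l)) (j+d)"
      by (rule run_fsm_shift)
    also have "run_fsm (\<lambda>k z. g' (k mod l) (w k) (y k) z) z1d (b*l) = Zb b w y"
      by (simp add: Zb_def dec_state_def)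
    also have "run_fsm (\<lambda>k' s. g' ((b*l + k') mod l) (w (b*l+k')) (y (b*l+k')) s) (Zb b w y) (j+d)
        = run_fsm (\<lambda>k s. g' (k mod l) (block w l b ! (k-1)) (block y l b ! (k-1)) s) (Zb b w y) (j+d)"
    proof (rule run_fsm_cong)
      fix k assume k: "1 \<le> k" "k \<le> j + d"
      then have kl: "k - 1 < l" using jd by linarith
      have "b*l + (k-1) + 1 = b*l+k" using k by simp
      then show "(\<lambda>s. g' ((b*l + k) mod l) (w (b*l+k)) (y (b*l+k)) s)
          = (\<lambda>s. g' (k mod l) (block w l b ! (k-1)) (block y l b ! (k-1)) s)"
        using block_nth[OF kl, of w b] block_nth[OF kl, of y b] by (simp add: add.commute[of "b*l"])
    qed
    finally show ?thesis .
  qed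
  have jdl: "j + d < l" by fact
  have bw: "block w l b ! (j+d) = w (b*l+j+1+d)" unfolding block_nth[OF jdl] i ..
  have by': "block y l b ! (j+d) = y (b*l+j+1+d)" unfolding block_nth[OF jdl] i ..
  have lhs: "Gd l d f' g' v0 (Zb b w y, block y l b) (block w l b) j
      = f' ((j+1+d) mod l) (w (b*l+j+1+d)) (y (b*l+j+1+d))
          (run_fsm (\<lambda>k s. g' (k mod l) (block w l b ! (k-1)) (block y l b ! (k-1)) s) (Zb b w y) (j+d))"
    unfolding Gd_def using jd by (simp only: if_True bw by' fst_conv snd_conv)
  have rhs: "dec_out n l d f' g' z1d vfix w y (b*l+j+1)
      = f' ((b*l+j+1+d) mod l) (w (b*l+j+1+d)) (y (b*l+j+1+d)) (dec_state l g' z1d w y (b*l+j+1+d))"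
    unfolding dec_out_def using le by simp
  show ?thesis unfolding lhs rhs mod ds ..
qed

end

lemma tail_count:
  fixes R :: real
  assumes "R \<ge> 0"
  shows "(\<Sum>j<L. if j + d < L then 0 else R) \<le> real d * R"
proof -
  have "(\<Sum>j<L. if j + d < L then 0 else R) = (\<Sum>j\<in>{..<L} \<inter> - {j. j + d < L}. R)"
    by (simp add: sum.If_cases)
  also have "\<dots> = real (card ({..<L} \<inter> - {j. j + d < L})) * R" by simp
  also have "card ({..<L} \<inter> - {j. j + d < L}) \<le> card {L - d..<L}"
    by (rule card_mono) auto
  also have "card {L - d..<L} \<le> d" by simp
  finally show ?thesis using assms by (simp add: mult_right_mono)
qed

context proc begin

lemma dist_pw:
  assumes b: "b < m" and rho0: "\<forall>a c. rho a c \<ge> 0" and rhoR: "\<forall>a c. rho a c \<le> R"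
  shows "block_dist rho (block u l b) (Gd l d f' g' v0 (Zb b w y, block y l b) (block w l b))
     \<le> (\<Sum>j<l. rho (u (b*l+j+1)) (dec_out n l d f' g' z1d vfix w y (b*l+j+1))) + real d * R"
proof -
  have R0: "R \<ge> 0" using rho0 rhoR by (meson order_trans)
  have "block_dist rho (block u l b) (Gd l d f' g' v0 (Zb b w y, block y l b) (block w l b))
      = (\<Sum>j<l. rho (u (b*l+j+1)) (Gd l d f' g' v0 (Zb b w y, block y l b) (block w l b) j))"
    unfolding block_dist_def by (intro sum.cong) (simp_all add: block_nth)
  also have "\<dots> \<le> (\<Sum>j<l. rho (u (b*l+j+1)) (dec_out n l d f' g' z1d vfix w y (b*l+j+1)) + (if j + d < l then 0 else R))"
  proof (intro sum_mono)
    fix j assume j: "j \<in> {..<l}"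
    show "rho (u (b*l+j+1)) (Gd l d f' g' v0 (Zb b w y, block y l b) (block w l b) j)
        \<le> rho (u (b*l+j+1)) (dec_out n l d f' g' z1d vfix w y (b*l+j+1)) + (if j + d < l then 0 else R)"
    proof (cases "j + d < l")
      case True
      then show ?thesis by (subst Gd_dec[OF b True, where vfix=vfix]) simp
    next
      case False
      then show ?thesis using rho0 rhoR by (simp add: add_nonneg_pos) (meson add_increasing)
    qed
  qed
  also have "\<dots> = (\<Sum>j<l. rho (u (b*l+j+1)) (dec_out n l d f' g' z1d vfix w y (b*l+j+1))) + (\<Sum>j<l. if j + d < l then 0 else R)"
    by (rule sum.distrib)
  also have "\<dots> \<le> (\<Sum>j<l. rho (u (b*l+j+1)) (dec_out n l d f' g' z1d vfix w y (b*l+j+1))) + real d * R"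
    using tail_count[OF R0, of d l] by simp
  finally show ?thesis .
qed

lemma P_bind: "P = bind_pmf Unif (\<lambda>b. map_pmf (Pair b) N)"
  unfolding P_def pair_pmf_def map_pmf_def ..

lemma exp_N_mono:
  fixes f g :: "(nat \<Rightarrow> 'w) \<times> (nat \<Rightarrow> 'y) \<Rightarrow> real"
  assumes "\<And>wy. f wy \<le> g wy"
  shows "measure_pmf.expectation N f \<le> measure_pmf.expectation N g"
proof -
  have "(\<Sum>x\<in>set_pmf N. pmf N x * f x) \<le> (\<Sum>x\<in>set_pmf N. pmf N x * g x)"
    by (intro sum_mono mult_left_mono) (use assms in auto)
  then show ?thesis by (simp add: exp_sum[OF fin_N])
qed

lemma dist_bound:
  assumes rho0: "\<forall>a c. rho a c \<ge> 0" and rhoR: "\<forall>a c. rho a c \<le> R"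
  shows "measure_pmf.expectation (Tq PWU LL qq) (\<lambda>(us, a, ws). block_dist rho us (Gd l d f' g' v0 a ws))
     \<le> real l * ((\<Sum>i=1..n. measure_pmf.expectation N (\<lambda>(w, y). rho (u i) (dec_out n l d f' g' z1d vfix w y i))) / real n)
       + real d * R"
proof -
  define E where "E i = measure_pmf.expectation N (\<lambda>(w, y). rho (u i) (dec_out n l d f' g' z1d vfix w y i))" for i
  define F where "F = (\<lambda>\<omega>. block_dist rho (block u l (fst \<omega>)) (Gd l d f' g' v0 (Zb (fst \<omega>) (fst (snd \<omega>)) (snd (snd \<omega>)),
      block (snd (snd \<omega>)) l (fst \<omega>)) (block (fst (snd \<omega>)) l (fst \<omega>))))"
  have intN: "integrable N h" for h :: "_ \<Rightarrow> real" by (rule integrable_measure_pmf_finite[OF fin_N])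
  have "measure_pmf.expectation (Tq PWU LL qq) (\<lambda>(us, a, ws). block_dist rho us (Gd l d f' g' v0 a ws))
      = measure_pmf.expectation P F"
    unfolding Tq_law Q_eq integral_map_pmf
    by (simp add: F_def q4_def qU_def qZ_def qY_def qW_def)
  also have "\<dots> = (\<Sum>b\<in>set_pmf Unif. pmf Unif b * measure_pmf.expectation (map_pmf (Pair b) N) F)"
    unfolding P_bind by (rule exp_bind[OF fin_Unif]) (simp add: fin_N)
  also have "\<dots> \<le> (\<Sum>b\<in>{0..<m}. (1 / real m) * ((\<Sum>j<l. E (b*l+j+1)) + real d * R))"
  proof (unfold set_Unif, intro sum_mono)
    fix b assume b: "b \<in> {0..<m}"
    have pU: "pmf Unif b = 1 / real m" using b m_pos by (simp add: Unif_def)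
    have "measure_pmf.expectation (map_pmf (Pair b) N) F
        \<le> measure_pmf.expectation N (\<lambda>wy. (\<Sum>j<l. (\<lambda>(w, y). rho (u (b*l+j+1)) (dec_out n l d f' g' z1d vfix w y (b*l+j+1))) wy) + real d * R)"
      unfolding integral_map_pmf
      by (rule exp_N_mono) (use dist_pw[OF _ rho0 rhoR] b in \<open>auto simp: F_def case_prod_unfold\<close>)
    also have "\<dots> = (\<Sum>j<l. E (b*l+j+1)) + real d * R"
      unfolding E_def by (simp add: integral_add integral_sum intN)
    finally show "pmf Unif b * measure_pmf.expectation (map_pmf (Pair b) N) F \<le> (1 / real m) * ((\<Sum>j<l. E (b*l+j+1)) + real d * R)"
      unfolding pU using m_pos by (intro mult_left_mono) auto
  qed
  also have "\<dots> = (1 / real m) * (\<Sum>b<m. \<Sum>j<l. E (b*l+j+1)) + real d * R"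
    unfolding atLeast0LessThan sum_distrib_left[symmetric] sum.distrib using m_pos by (simp add: field_simps)
  also have "(\<Sum>b<m. \<Sum>j<l. E (b*l+j+1)) = (\<Sum>i=1..n. E i)" by (rule sum_blocks_n[OF n_eq, symmetric])
  also have "1 / real m = real l / real n"
  proof -
    have "real n = real m * real l" using n_eq by (metis of_nat_mult)
    then show ?thesis using m_pos l_pos by (simp add: field_simps)
  qed
  finally show ?thesis unfolding E_def by simp
qed

end

lemma main_bound:
  fixes PYX :: "'x::finite \<Rightarrow> 'y::finite pmf" and u :: "nat \<Rightarrow> 'u::finite" and PWU :: "'u \<Rightarrow> 'w::finite pmf"
    and rho :: "'u \<Rightarrow> 'v::finite \<Rightarrow> real" and x :: "nat \<Rightarrow> 'x"
  assumes l: "l > 0" and n: "n > 0" and ldvd: "l dvd n"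
    and rho0: "\<forall>a b. rho a b \<ge> 0"
    and z1: "z1d < sd" and g'inv: "\<forall>t b c z. z < sd \<longrightarrow> g' t b c z < sd"
    and cost: "(\<Sum>i=1..n. phi (x i)) / real n \<le> Gam"
    and Rge: "capacity_cost PYX phi Gam + log 2 (real sd) / real l \<le> R"
  shows "wz_dr (empirical_dist u n l) PWU rho l R
     \<le> (\<Sum>i=1..n. measure_pmf.expectation (noise_dist n PWU PYX u x)
              (\<lambda>(w, y). rho (u i) (dec_out n l d f' g' z1d vfix w y i))) / real n
        + Max (range (\<lambda>(a, b). rho a b)) * real d / real l"
proof -
  interpret proc n l u x PWU PYX g' z1d by unfold_locales (use l n ldvd in auto)
  define \<rho>max where "\<rho>max = Max (range (\<lambda>(a, b). rho a b))"
  have rhoR: "\<forall>a c. rho a c \<le> \<rho>max"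
  proof (intro allI)
    fix a c
    have "rho a c = (\<lambda>(a, b). rho a b) (a, c)" by simp
    also have "\<dots> \<le> \<rho>max" unfolding \<rho>max_def by (rule Max_ge) auto
    finally show "rho a c \<le> \<rho>max" .
  qed
  define LHS where "LHS = (\<Sum>i=1..n. measure_pmf.expectation (noise_dist n PWU PYX u x)
              (\<lambda>(w, y). rho (u i) (dec_out n l d f' g' z1d vfix w y i))) / real n"
  define D0 where "D0 = LHS + \<rho>max * real d / real l"
  define Uh where "Uh = empirical_dist u n l"
  define G where "G = Gd l d f' g' (vfix 0)"
  obtain K G' where KG: "\<forall>us. set_pmf (K us) \<subseteq> {0..<CARD('u) ^ l + 1}"
     "rateT (wzj (bind_pmf LL qq) PWU K) \<le> rateT (Tq PWU LL qq)"
     "measure_pmf.expectation (wzj (bind_pmf LL qq) PWU K) (\<lambda>(us, a, ws). block_dist rho us (G' a ws))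
       \<le> measure_pmf.expectation (Tq PWU LL qq) (\<lambda>(us, a, ws). block_dist rho us (G a ws))"
    using wz_reduce[where q=qq and Ch=PWU and rho=rho and G=G and l=l, OF fin_LL qq_len] by blast
  have bU: "bind_pmf LL qq = Uh" unfolding Uh_def by (rule bind_LL_qq)
  have fUh: "finite (set_pmf Uh)" unfolding Uh_def empirical_dist_def using fin_Unif unfolding Unif_def m_def by simp
  have rate: "wz_rate Uh PWU l K \<le> R"
  proof -
    have "rateT (wzj Uh PWU K) \<le> log 2 (real sd) + real l * capacity_cost PYX phi Gam"
      using KG(2) rate_bound[OF z1 g'inv cost] unfolding bU by linarith
    then have "rateT (wzj Uh PWU K) / real l \<le> (log 2 (real sd) + real l * capacity_cost PYX phi Gam) / real l"
      by (rule divide_right_mono) simp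
    also have "\<dots> = log 2 (real sd) / real l + capacity_cost PYX phi Gam"
      using l by (simp add: add_divide_distrib)
    finally have "rateT (wzj Uh PWU K) / real l \<le> log 2 (real sd) / real l + capacity_cost PYX phi Gam" .
    then show ?thesis unfolding wz_rate_eq using Rge by linarith
  qed
  have dist: "wz_distortion Uh PWU rho K G' \<le> real l * D0"
  proof -
    have "wz_distortion Uh PWU rho K G' \<le> measure_pmf.expectation (Tq PWU LL qq) (\<lambda>(us, a, ws). block_dist rho us (G a ws))"
      unfolding wz_distortion_eq using KG(3) unfolding bU .
    also have "\<dots> \<le> real l * LHS + real d * \<rho>max"
      unfolding G_def LHS_def N_def[symmetric] by (rule dist_bound[OF rho0 rhoR])
    also have "\<dots> = real l * D0" unfolding D0_def using l by (simp add: field_simps)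
    finally show ?thesis .
  qed
  have adm: "wz_admissible Uh PWU rho l D0 K"
    unfolding wz_admissible_def using KG(1) dist by blast
  have rate_nonneg: "0 \<le> wz_rate Uh PWU l K'" if "wz_admissible Uh PWU rho l D K'" for D K'
  proof -
    have fK: "finite (set_pmf (K' us))" for us
      using that unfolding wz_admissible_def by (meson finite_atLeastLessThan finite_subset)
    show ?thesis unfolding wz_rate_eq using rateT_cmi(2)[OF fUh fK, of PWU] by simp
  qed
  have rd: "wz_rd Uh PWU rho l D0 \<le> R"
  proof -
    have "wz_rd Uh PWU rho l D0 \<le> wz_rate Uh PWU l K"
      unfolding wz_rd_def
      by (rule cInf_lower) (use adm rate_nonneg in \<open>auto intro!: bdd_belowI[of _ 0]\<close>)
    then show ?thesis using rate by simp
  qed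
  have D_nonneg: "0 \<le> D" if admD: "wz_admissible Uh PWU rho l D K'" for D K'
  proof -
    obtain G'' where "wz_distortion Uh PWU rho K' G'' \<le> real l * D" using admD unfolding wz_admissible_def by blast
    moreover have "0 \<le> wz_distortion Uh PWU rho K' G''"
      unfolding wz_distortion_def by (intro integral_nonneg_AE AE_I2) (auto simp: block_dist_def rho0 sum_nonneg split: prod.splits)
    ultimately have "0 \<le> real l * D" by linarith
    then show ?thesis using l by (simp add: zero_le_mult_iff)
  qed
  have "wz_dr Uh PWU rho l R \<le> D0"
    unfolding wz_dr_def
    by (rule cInf_lower) (use adm rd D_nonneg in \<open>auto intro!: bdd_belowI[of _ 0]\<close>)
  then show ?thesis unfolding Uh_def D0_def LHS_def \<rho>max_def by simp
qed

theorem theorem2: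
  fixes PYX :: "'x::finite \<Rightarrow> 'y::finite pmf"
  shows "\<forall>l s\<^sub>e. l > 0 \<longrightarrow> s\<^sub>e > 0 \<longrightarrow>
    (\<exists>\<epsilon> :: nat \<Rightarrow> real. (\<lambda>n. sqrt (real n) * \<epsilon> n) \<longlonglongrightarrow> 0 \<and>
      (\<forall>(n::nat) (u :: nat \<Rightarrow> 'u::finite) (PWU :: 'u \<Rightarrow> 'w::finite pmf)
         (rho :: 'u \<Rightarrow> 'v::finite \<Rightarrow> real) (phi :: 'x \<Rightarrow> real) (\<Gamma>::real) (d::nat) (s\<^sub>d::nat)
         (f :: nat \<Rightarrow> 'u \<Rightarrow> nat \<Rightarrow> 'x) (g :: nat \<Rightarrow> 'u \<Rightarrow> nat \<Rightarrow> nat) (z1e::nat)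
         (f' :: nat \<Rightarrow> 'w \<Rightarrow> 'y \<Rightarrow> nat \<Rightarrow> 'v) (g' :: nat \<Rightarrow> 'w \<Rightarrow> 'y \<Rightarrow> nat \<Rightarrow> nat) (z1d::nat)
         (vfix :: nat \<Rightarrow> 'v).
        n > 0 \<longrightarrow> l dvd n \<longrightarrow> d > 0 \<longrightarrow>
        (\<forall>a b. rho a b \<ge> 0) \<longrightarrow> (\<forall>a. phi a \<ge> 0) \<longrightarrow> \<Gamma> \<ge> 0 \<longrightarrow>
        z1e < s\<^sub>e \<longrightarrow> (\<forall>t a z. z < s\<^sub>e \<longrightarrow> g t a z < s\<^sub>e) \<longrightarrow>
        z1d < s\<^sub>d \<longrightarrow> (\<forall>t b c z. z < s\<^sub>d \<longrightarrow> g' t b c z < s\<^sub>d) \<longrightarrow>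
        (\<Sum>i=1..n. phi (enc_out l f g z1e u i)) / real n \<le> \<Gamma> \<longrightarrow>
        (\<Sum>i=1..n. measure_pmf.expectation (noise_dist n PWU PYX u (enc_out l f g z1e u))
              (\<lambda>(w, y). rho (u i) (dec_out n l d f' g' z1d vfix w y i))) / real n
        \<ge> wz_dr (empirical_dist u n l) PWU rho l
              (capacity_cost PYX phi \<Gamma> + log 2 (real s\<^sub>d) / real l
               + real s\<^sub>e * real CARD('u) ^ l * log 2 (real CARD('y)) / sqrt (real n) + \<epsilon> n)
          - Max (range (\<lambda>(a, b). rho a b)) * real d / real l))"
proof (intro allI impI)
  fix l s\<^sub>e :: nat
  assume l: "l > 0" and se: "s\<^sub>e > 0"
  show "\<exists>\<epsilon> :: nat \<Rightarrow> real. (\<lambda>n. sqrt (real n) * \<epsilon> n) \<longlonglongrightarrow> 0 \<and>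
      (\<forall>(n::nat) (u :: nat \<Rightarrow> 'u::finite) (PWU :: 'u \<Rightarrow> 'w::finite pmf)
         (rho :: 'u \<Rightarrow> 'v::finite \<Rightarrow> real) (phi :: 'x \<Rightarrow> real) (\<Gamma>::real) (d::nat) (s\<^sub>d::nat)
         (f :: nat \<Rightarrow> 'u \<Rightarrow> nat \<Rightarrow> 'x) (g :: nat \<Rightarrow> 'u \<Rightarrow> nat \<Rightarrow> nat) (z1e::nat)
         (f' :: nat \<Rightarrow> 'w \<Rightarrow> 'y \<Rightarrow> nat \<Rightarrow> 'v) (g' :: nat \<Rightarrow> 'w \<Rightarrow> 'y \<Rightarrow> nat \<Rightarrow> nat) (z1d::nat)
         (vfix :: nat \<Rightarrow> 'v).
        n > 0 \<longrightarrow> l dvd n \<longrightarrow> d > 0 \<longrightarrow>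
        (\<forall>a b. rho a b \<ge> 0) \<longrightarrow> (\<forall>a. phi a \<ge> 0) \<longrightarrow> \<Gamma> \<ge> 0 \<longrightarrow>
        z1e < s\<^sub>e \<longrightarrow> (\<forall>t a z. z < s\<^sub>e \<longrightarrow> g t a z < s\<^sub>e) \<longrightarrow>
        z1d < s\<^sub>d \<longrightarrow> (\<forall>t b c z. z < s\<^sub>d \<longrightarrow> g' t b c z < s\<^sub>d) \<longrightarrow>
        (\<Sum>i=1..n. phi (enc_out l f g z1e u i)) / real n \<le> \<Gamma> \<longrightarrow>
        (\<Sum>i=1..n. measure_pmf.expectation (noise_dist n PWU PYX u (enc_out l f g z1e u))
              (\<lambda>(w, y). rho (u i) (dec_out n l d f' g' z1d vfix w y i))) / real n
        \<ge> wz_dr (empirical_dist u n l) PWU rho l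
              (capacity_cost PYX phi \<Gamma> + log 2 (real s\<^sub>d) / real l
               + real s\<^sub>e * real CARD('u) ^ l * log 2 (real CARD('y)) / sqrt (real n) + \<epsilon> n)
          - Max (range (\<lambda>(a, b). rho a b)) * real d / real l)"
  proof (intro exI[of _ "\<lambda>n. 0"] conjI allI impI)
    show "(\<lambda>n. sqrt (real n) * 0) \<longlonglongrightarrow> 0" by simp
    fix n :: nat and u :: "nat \<Rightarrow> 'u::finite" and PWU :: "'u \<Rightarrow> 'w::finite pmf"
      and rho :: "'u \<Rightarrow> 'v::finite \<Rightarrow> real" and phi :: "'x \<Rightarrow> real" and \<Gamma> :: real and d s\<^sub>d :: nat
      and f :: "nat \<Rightarrow> 'u \<Rightarrow> nat \<Rightarrow> 'x" and g :: "nat \<Rightarrow> 'u \<Rightarrow> nat \<Rightarrow> nat" and z1e :: nat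
      and f' :: "nat \<Rightarrow> 'w \<Rightarrow> 'y \<Rightarrow> nat \<Rightarrow> 'v" and g' :: "nat \<Rightarrow> 'w \<Rightarrow> 'y \<Rightarrow> nat \<Rightarrow> nat" and z1d :: nat
      and vfix :: "nat \<Rightarrow> 'v"
    assume n: "n > 0" and ldvd: "l dvd n" and d: "d > 0" and rho0: "\<forall>a b. rho a b \<ge> 0"
      and phi0: "\<forall>a. phi a \<ge> 0" and G0: "\<Gamma> \<ge> 0" and z1e: "z1e < s\<^sub>e"
      and ginv: "\<forall>t a z. z < s\<^sub>e \<longrightarrow> g t a z < s\<^sub>e" and z1d: "z1d < s\<^sub>d"
      and g'inv: "\<forall>t b c z. z < s\<^sub>d \<longrightarrow> g' t b c z < s\<^sub>d"
      and cost: "(\<Sum>i=1..n. phi (enc_out l f g z1e u i)) / real n \<le> \<Gamma>"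
    have card1: "1 \<le> real CARD('y)" by simp
    have extra: "0 \<le> real s\<^sub>e * real CARD('u) ^ l * log 2 (real CARD('y)) / sqrt (real n)"
      using card1 by (intro divide_nonneg_nonneg mult_nonneg_nonneg) auto
    have "wz_dr (empirical_dist u n l) PWU rho l
              (capacity_cost PYX phi \<Gamma> + log 2 (real s\<^sub>d) / real l
               + real s\<^sub>e * real CARD('u) ^ l * log 2 (real CARD('y)) / sqrt (real n) + 0)
        \<le> (\<Sum>i=1..n. measure_pmf.expectation (noise_dist n PWU PYX u (enc_out l f g z1e u))
              (\<lambda>(w, y). rho (u i) (dec_out n l d f' g' z1d vfix w y i))) / real n
        + Max (range (\<lambda>(a, b). rho a b)) * real d / real l"
      by (rule main_bound[OF l n ldvd rho0 z1d g'inv cost]) (use extra in simp)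
    then show "(\<Sum>i=1..n. measure_pmf.expectation (noise_dist n PWU PYX u (enc_out l f g z1e u))
              (\<lambda>(w, y). rho (u i) (dec_out n l d f' g' z1d vfix w y i))) / real n
        \<ge> wz_dr (empirical_dist u n l) PWU rho l
              (capacity_cost PYX phi \<Gamma> + log 2 (real s\<^sub>d) / real l
               + real s\<^sub>e * real CARD('u) ^ l * log 2 (real CARD('y)) / sqrt (real n) + 0)
          - Max (range (\<lambda>(a, b). rho a b)) * real d / real l" by linarith
  qed
qed

end
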